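(* Let $G$ be a solvable group of derived length $d$. (i) If $\exp(G)$ is odd, then $\exp(G\otimes G)$ divides $(\exp(G))^d$; in particular $\exp(M(G))$ divides $(\exp(G))^d$. (ii) If $\exp(G)$ is even, then $\exp(G\otimes G)$ divides $2^{d-1}(\exp(G))^d$; in particular $\exp(M(G))$ divides $2^{d-1}(\exp(G))^d$.
   Context: Conventions: ${}^g h = ghg^{-1}$, $[g,h]=ghg^{-1}h^{-1}$. The nonabelian tensor square $G\otimes G$ is the group generated by symbols $g\otimes h$ ($g,h\in G$) subject to $gg'\otimes h=({}^g g'\otimes {}^g h)(g\otimes h)$ and $g\otimes hh'=(g\otimes h)({}^h g\otimes {}^h h')$. $M(G)\cong H_2(G,\mathbb{Z})$ is the Schur multiplier. *)

theory Defs
  imports "HOL-Algebra.Algebra"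
begin

text \<open>Words over an alphabet: a letter (x, True) stands for the generator x,
  (x, False) for its formal inverse.\<close>

type_synonym 'x word = "('x \<times> bool) list"

definition word_inv :: "'x word \<Rightarrow> 'x word" where
  "word_inv w = rev (map (\<lambda>(x, b). (x, \<not> b)) w)"

inductive_set pres_eq :: "'x word set \<Rightarrow> ('x word \<times> 'x word) set"
  for R :: "'x word set" where
    refl: "(w, w) \<in> pres_eq R"
  | sym: "(u, v) \<in> pres_eq R \<Longrightarrow> (v, u) \<in> pres_eq R"
  | trans: "(u, v) \<in> pres_eq R \<Longrightarrow> (v, w) \<in> pres_eq R \<Longrightarrow> (u, w) \<in> pres_eq R"
  | cancel: "(u @ [(x, b), (x, \<not> b)] @ v, u @ v) \<in> pres_eq R"
  | relator: "r \<in> R \<Longrightarrow> (u @ r @ v, u @ v) \<in> pres_eq R"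

definition pres_class :: "'x word set \<Rightarrow> 'x word \<Rightarrow> 'x word set" where
  "pres_class R w = {v. (w, v) \<in> pres_eq R}"

definition presented_group :: "'x set \<Rightarrow> 'x word set \<Rightarrow> 'x word set monoid" where
  "presented_group Gens R =
     \<lparr> carrier = {pres_class R w | w. (\<forall>l\<in>set w. fst l \<in> Gens)},
       monoid.mult = (\<lambda>A B. pres_class R ((SOME a. a \<in> A) @ (SOME b. b \<in> B))),
       monoid.one = pres_class R [] \<rparr>"

definition gconj :: "('a, 'b) monoid_scheme \<Rightarrow> 'a \<Rightarrow> 'a \<Rightarrow> 'a" where
  "gconj G g h = g \<otimes>\<^bsub>G\<^esub> h \<otimes>\<^bsub>G\<^esub> inv\<^bsub>G\<^esub> g"

text \<open>Generator (g, h) stands for g \<otimes> h.  Relators: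
  gg' (x) h = (gconj g g' (x) gconj g h)(g (x) h) and g (x) hh' = (g (x) h)(gconj h g (x) gconj h h').\<close>

definition tensor_relators :: "('a, 'b) monoid_scheme \<Rightarrow> ('a \<times> 'a) word set" where
  "tensor_relators G =
     {[((g \<otimes>\<^bsub>G\<^esub> g', h), True), ((g, h), False), ((gconj G g g', gconj G g h), False)]
        | g g' h. g \<in> carrier G \<and> g' \<in> carrier G \<and> h \<in> carrier G}
   \<union> {[((g, h \<otimes>\<^bsub>G\<^esub> h'), True), ((gconj G h g, gconj G h h'), False), ((g, h), False)]
        | g h h'. g \<in> carrier G \<and> h \<in> carrier G \<and> h' \<in> carrier G}"

definition tensor_square :: "('a, 'b) monoid_scheme \<Rightarrow> ('a \<times> 'a) word set monoid" where
  "tensor_square G = presented_group (Sigma (carrier G) (\<lambda>_. carrier G)) (tensor_relators G)"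

definition word_eval :: "('a, 'b) monoid_scheme \<Rightarrow> 'a word \<Rightarrow> 'a" where
  "word_eval G w = foldr (\<lambda>(x, b) acc. (if b then x else inv\<^bsub>G\<^esub> x) \<otimes>\<^bsub>G\<^esub> acc) w \<one>\<^bsub>G\<^esub>"

definition free_on_carrier :: "('a, 'b) monoid_scheme \<Rightarrow> 'a word set monoid" where
  "free_on_carrier G = presented_group (carrier G) {}"

definition hopf_R :: "('a, 'b) monoid_scheme \<Rightarrow> 'a word set set" where
  "hopf_R G = {c \<in> carrier (free_on_carrier G).
                 \<exists>w \<in> c. (\<forall>l\<in>set w. fst l \<in> carrier G) \<and> word_eval G w = \<one>\<^bsub>G\<^esub>}"

definition mixed_commutator :: "('a, 'b) monoid_scheme \<Rightarrow> 'a set \<Rightarrow> 'a set \<Rightarrow> 'a set" where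
  "mixed_commutator G H K =
     generate G {h \<otimes>\<^bsub>G\<^esub> k \<otimes>\<^bsub>G\<^esub> inv\<^bsub>G\<^esub> h \<otimes>\<^bsub>G\<^esub> inv\<^bsub>G\<^esub> k | h k. h \<in> H \<and> k \<in> K}"

text \<open>Hopf: M(G) = (R \<inter> [F,F]) / [F,R].\<close>

definition schur_multiplier :: "('a, 'b) monoid_scheme \<Rightarrow> 'a word set set monoid" where
  "schur_multiplier G =
     (let F = free_on_carrier G; R = hopf_R G in
       (F\<lparr>carrier := R \<inter> mixed_commutator F (carrier F) (carrier F)\<rparr>)
         Mod (mixed_commutator F (carrier F) R))"

definition group_exponent :: "('a, 'b) monoid_scheme \<Rightarrow> nat" where
  "group_exponent G =
     (if \<exists>n::nat>0. \<forall>x\<in>carrier G. x [^]\<^bsub>G\<^esub> n = \<one>\<^bsub>G\<^esub>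
      then LEAST n::nat. n > 0 \<and> (\<forall>x\<in>carrier G. x [^]\<^bsub>G\<^esub> n = \<one>\<^bsub>G\<^esub>)
      else 0)"

definition derived_length :: "('a, 'b) monoid_scheme \<Rightarrow> nat" where
  "derived_length G = (LEAST n. (derived G ^^ n) (carrier G) = {\<one>\<^bsub>G\<^esub>})"

end

theory Submission
  imports Defs
begin

definition word_over :: "'x set \<Rightarrow> 'x word \<Rightarrow> bool" where
  "word_over Gs w \<longleftrightarrow> (\<forall>l\<in>set w. fst l \<in> Gs)"

lemma word_over_simps[simp]:
  "word_over Gs []" "word_over Gs (l # w) \<longleftrightarrow> fst l \<in> Gs \<and> word_over Gs w"
  "word_over Gs (u @ v) \<longleftrightarrow> word_over Gs u \<and> word_over Gs v"
  by (auto simp: word_over_def)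

lemma pres_eq_cong:
  assumes "(u, v) \<in> pres_eq R"
  shows "(p @ u @ q, p @ v @ q) \<in> pres_eq R"
  using assms
proof (induction rule: pres_eq.induct)
  case (refl w) then show ?case by (rule pres_eq.refl)
next
  case (sym u v) show ?case by (rule pres_eq.sym[OF sym.IH])
next
  case (trans u v w) show ?case by (rule pres_eq.trans[OF trans.IH])
next
  case (cancel u x b v)
  have "((p @ u) @ [(x, b), (x, \<not> b)] @ (v @ q), (p @ u) @ (v @ q)) \<in> pres_eq R"
    by (rule pres_eq.cancel)
  then show ?case by simp
next
  case (relator r u v)
  have "((p @ u) @ r @ (v @ q), (p @ u) @ (v @ q)) \<in> pres_eq R"
    by (rule pres_eq.relator[OF relator])
  then show ?case by simp
qed

lemma pres_eq_cong2:
  assumes "(u, v) \<in> pres_eq R" "(u', v') \<in> pres_eq R"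
  shows "(u @ u', v @ v') \<in> pres_eq R"
proof -
  have "([] @ u @ u', [] @ v @ u') \<in> pres_eq R" by (rule pres_eq_cong[OF assms(1)])
  moreover have "(v @ u' @ [], v @ v' @ []) \<in> pres_eq R" by (rule pres_eq_cong[OF assms(2)])
  ultimately show ?thesis by (auto intro: pres_eq.trans)
qed

lemma pres_class_eq_iff: "pres_class R u = pres_class R v \<longleftrightarrow> (u, v) \<in> pres_eq R"
proof
  assume "pres_class R u = pres_class R v"
  moreover have "v \<in> pres_class R v" by (simp add: pres_class_def pres_eq.refl)
  ultimately have "v \<in> pres_class R u" by simp
  then show "(u, v) \<in> pres_eq R" by (simp add: pres_class_def)
next
  assume a: "(u, v) \<in> pres_eq R"
  show "pres_class R u = pres_class R v"
    unfolding pres_class_def using a by (auto intro: pres_eq.trans pres_eq.sym)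
qed

lemma pres_class_mem: "w \<in> pres_class R w"
  by (simp add: pres_class_def pres_eq.refl)

lemma pres_class_some: "pres_class R (SOME a. a \<in> pres_class R w) = pres_class R w"
proof -
  have "(SOME a. a \<in> pres_class R w) \<in> pres_class R w" by (rule someI, rule pres_class_mem)
  then have "(w, SOME a. a \<in> pres_class R w) \<in> pres_eq R" by (simp add: pres_class_def)
  then show ?thesis by (simp add: pres_class_eq_iff pres_eq.sym)
qed

lemma pres_mult:
  "pres_class R u \<otimes>\<^bsub>presented_group Gs R\<^esub> pres_class R v = pres_class R (u @ v)"
proof -
  have "pres_class R ((SOME a. a \<in> pres_class R u) @ (SOME b. b \<in> pres_class R v))
        = pres_class R (u @ v)"
    unfolding pres_class_eq_iff
    by (rule pres_eq_cong2; subst pres_class_eq_iff[symmetric]; rule pres_class_some)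
  then show ?thesis by (simp add: presented_group_def)
qed

lemma pres_one: "\<one>\<^bsub>presented_group Gs R\<^esub> = pres_class R []"
  by (simp add: presented_group_def)

lemma pres_carrier: "carrier (presented_group Gs R) = {pres_class R w | w. word_over Gs w}"
  by (simp add: presented_group_def word_over_def)

lemma word_inv_simps[simp]: "word_inv [] = []" "word_inv (l # w) = word_inv w @ [(fst l, \<not> snd l)]"
  "word_inv (u @ v) = word_inv v @ word_inv u"
  by (auto simp: word_inv_def split: prod.splits)

lemma word_over_inv[simp]: "word_over Gs (word_inv w) = word_over Gs w"
  by (induction w) auto

lemma word_inv_cancel: "(word_inv w @ w, []) \<in> pres_eq R"
proof (induction w)
  case Nil then show ?case by (simp add: pres_eq.refl)
next
  case (Cons l w)
  obtain x b where l: "l = (x, b)" by force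
  have "(word_inv w @ [(x, \<not> b), (x, \<not> \<not> b)] @ w, word_inv w @ w) \<in> pres_eq R"
    by (rule pres_eq.cancel)
  then have "(word_inv (l # w) @ l # w, word_inv w @ w) \<in> pres_eq R" by (simp add: l)
  then show ?case using Cons by (blast intro: pres_eq.trans)
qed

lemma presented_group_is_group: "group (presented_group Gs R)"
proof (rule groupI)
  fix A B assume "A \<in> carrier (presented_group Gs R)" "B \<in> carrier (presented_group Gs R)"
  then show "A \<otimes>\<^bsub>presented_group Gs R\<^esub> B \<in> carrier (presented_group Gs R)"
    by (auto simp: pres_carrier pres_mult)
next
  show "\<one>\<^bsub>presented_group Gs R\<^esub> \<in> carrier (presented_group Gs R)"
    by (auto simp: pres_carrier pres_one intro: exI[of _ "[]"])
next
  fix A B C assume "A \<in> carrier (presented_group Gs R)" "B \<in> carrier (presented_group Gs R)"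
    "C \<in> carrier (presented_group Gs R)"
  then show "A \<otimes>\<^bsub>presented_group Gs R\<^esub> B \<otimes>\<^bsub>presented_group Gs R\<^esub> C =
             A \<otimes>\<^bsub>presented_group Gs R\<^esub> (B \<otimes>\<^bsub>presented_group Gs R\<^esub> C)"
    by (auto simp: pres_carrier pres_mult)
next
  fix A assume "A \<in> carrier (presented_group Gs R)"
  then show "\<one>\<^bsub>presented_group Gs R\<^esub> \<otimes>\<^bsub>presented_group Gs R\<^esub> A = A"
    by (auto simp: pres_carrier pres_mult pres_one)
next
  fix A assume "A \<in> carrier (presented_group Gs R)"
  then obtain w where A: "A = pres_class R w" "word_over Gs w" by (auto simp: pres_carrier)
  show "\<exists>B\<in>carrier (presented_group Gs R). B \<otimes>\<^bsub>presented_group Gs R\<^esub> A = \<one>\<^bsub>presented_group Gs R\<^esub>"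
  proof (intro bexI)
    show "pres_class R (word_inv w) \<otimes>\<^bsub>presented_group Gs R\<^esub> A = \<one>\<^bsub>presented_group Gs R\<^esub>"
      using A by (simp add: pres_mult pres_one pres_class_eq_iff word_inv_cancel)
    show "pres_class R (word_inv w) \<in> carrier (presented_group Gs R)"
      using A by (auto simp: pres_carrier)
  qed
qed


definition wev :: "('c, 'd) monoid_scheme \<Rightarrow> ('x \<Rightarrow> 'c) \<Rightarrow> 'x word \<Rightarrow> 'c" where
  "wev H f w = foldr (\<lambda>(x, b) acc. (if b then f x else inv\<^bsub>H\<^esub> f x) \<otimes>\<^bsub>H\<^esub> acc) w \<one>\<^bsub>H\<^esub>"

lemma wev_simps[simp]: "wev H f [] = \<one>\<^bsub>H\<^esub>"
  "wev H f (l # w) = (if snd l then f (fst l) else inv\<^bsub>H\<^esub> f (fst l)) \<otimes>\<^bsub>H\<^esub> wev H f w"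
  by (auto simp: wev_def split: prod.splits)

lemma wev_carrier:
  assumes "group H" "\<And>x. f x \<in> carrier H" shows "wev H f w \<in> carrier H"
proof -
  interpret H: group H by fact
  show ?thesis using assms(2) by (induction w) auto
qed

lemma wev_append:
  assumes "group H" "\<And>x. f x \<in> carrier H"
  shows "wev H f (u @ v) = wev H f u \<otimes>\<^bsub>H\<^esub> wev H f v"
proof -
  interpret H: group H by fact
  have wc: "\<And>w. wev H f w \<in> carrier H" by (rule wev_carrier[of H f], rule assms(1), rule assms(2))
  show ?thesis
  proof (induction u)
    case Nil then show ?case using wc by simp
  next
    case (Cons l u)
    show ?case using Cons wc assms(2) by (simp add: H.m_assoc)
  qed
qed

lemma wev_pres_eq:
  assumes "group H" "\<And>x. f x \<in> carrier H" "\<And>r. r \<in> R \<Longrightarrow> wev H f r = \<one>\<^bsub>H\<^esub>"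
    and "(u, v) \<in> pres_eq R"
  shows "wev H f u = wev H f v"
  using assms(4)
proof (induction rule: pres_eq.induct)
  case (cancel u x b v)
  interpret H: group H by fact
  have c: "wev H f [(x, b), (x, \<not> b)] = \<one>\<^bsub>H\<^esub>"
    using assms(2)[of x] by auto
  have wc: "\<And>w. wev H f w \<in> carrier H" by (rule wev_carrier[of H f], rule assms(1), rule assms(2))
  show ?case using wc
    by (simp only: wev_append[of H f, OF assms(1,2)] c) simp
next
  case (relator r u v)
  interpret H: group H by fact
  have wc: "\<And>w. wev H f w \<in> carrier H" by (rule wev_carrier[of H f], rule assms(1), rule assms(2))
  show ?case using wc
    by (simp only: wev_append[of H f, OF assms(1,2)] assms(3)[OF relator]) simp
qed auto

definition pres_hom :: "('c, 'd) monoid_scheme \<Rightarrow> ('x \<Rightarrow> 'c) \<Rightarrow> 'x word set \<Rightarrow> 'c" where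
  "pres_hom H f A = wev H f (SOME a. a \<in> A)"

lemma pres_hom_class:
  assumes "group H" "\<And>x. f x \<in> carrier H" "\<And>r. r \<in> R \<Longrightarrow> wev H f r = \<one>\<^bsub>H\<^esub>"
  shows "pres_hom H f (pres_class R w) = wev H f w"
proof -
  have "(SOME a. a \<in> pres_class R w) \<in> pres_class R w" by (rule someI, rule pres_class_mem)
  then have "(w, SOME a. a \<in> pres_class R w) \<in> pres_eq R" by (simp add: pres_class_def)
  then show ?thesis unfolding pres_hom_def by (metis wev_pres_eq[OF assms])
qed

lemma pres_hom_hom:
  assumes "group H" "\<And>x. f x \<in> carrier H" "\<And>r. r \<in> R \<Longrightarrow> wev H f r = \<one>\<^bsub>H\<^esub>"
  shows "pres_hom H f \<in> hom (presented_group Gs R) H"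
proof (rule homI)
  fix A assume "A \<in> carrier (presented_group Gs R)"
  then obtain w where "A = pres_class R w" by (auto simp: pres_carrier)
  then show "pres_hom H f A \<in> carrier H"
    using pres_hom_class[OF assms] wev_carrier[of H f, OF assms(1,2)] by simp
next
  fix A B assume "A \<in> carrier (presented_group Gs R)" "B \<in> carrier (presented_group Gs R)"
  then obtain u v where "A = pres_class R u" "B = pres_class R v" by (auto simp: pres_carrier)
  then show "pres_hom H f (A \<otimes>\<^bsub>presented_group Gs R\<^esub> B) = pres_hom H f A \<otimes>\<^bsub>H\<^esub> pres_hom H f B"
    by (simp add: pres_mult pres_hom_class[OF assms] wev_append[of H f, OF assms(1,2)])
qed

definition pgen :: "'x word set \<Rightarrow> 'x \<Rightarrow> 'x word set" where
  "pgen R x = pres_class R [(x, True)]"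

lemma pgen_carrier: "x \<in> Gs \<Longrightarrow> pgen R x \<in> carrier (presented_group Gs R)"
  by (auto simp: pgen_def pres_carrier intro!: exI[of _ "[(x, True)]"])

lemma pgen_inv: assumes "x \<in> Gs"
  shows "inv\<^bsub>presented_group Gs R\<^esub> pgen R x = pres_class R [(x, False)]"
proof -
  interpret P: group "presented_group Gs R" by (rule presented_group_is_group)
  have "pres_class R [(x, False)] \<otimes>\<^bsub>presented_group Gs R\<^esub> pgen R x = \<one>\<^bsub>presented_group Gs R\<^esub>"
    unfolding pgen_def pres_mult pres_one pres_class_eq_iff
    using pres_eq.cancel[of "[]" x False "[]" R] by simp
  moreover have "pres_class R [(x, False)] \<in> carrier (presented_group Gs R)"
    using assms by (auto simp: pres_carrier intro!: exI[of _ "[(x, False)]"])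
  ultimately show ?thesis using P.inv_equality pgen_carrier[OF assms] by blast
qed

lemma pres_hom_gen:
  assumes "group H" "\<And>x. f x \<in> carrier H" "\<And>r. r \<in> R \<Longrightarrow> wev H f r = \<one>\<^bsub>H\<^esub>"
  shows "pres_hom H f (pgen R x) = f x"
  using assms(2)[of x] assms(1) by (simp add: pgen_def pres_hom_class[OF assms] group.is_monoid)

lemma pres_relator: "r \<in> R \<Longrightarrow> pres_class R r = \<one>\<^bsub>presented_group Gs R\<^esub>"
  unfolding pres_one pres_class_eq_iff using pres_eq.relator[of r R "[]" "[]"] by simp

lemma pres_class_cons:
  "pres_class R (l # w) = pres_class R [l] \<otimes>\<^bsub>presented_group Gs R\<^esub> pres_class R w"
  by (simp add: pres_mult)

lemma pres_word_generate:
  assumes "word_over Gs w"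
  shows "pres_class R w \<in> generate (presented_group Gs R) (pgen R ` Gs)"
  using assms
proof (induction w)
  case Nil
  have "\<one>\<^bsub>presented_group Gs R\<^esub> \<in> generate (presented_group Gs R) (pgen R ` Gs)"
    by (rule generate.one)
  then show ?case by (simp add: pres_one)
next
  case (Cons l w)
  obtain x b where l: "l = (x, b)" by force
  have x: "x \<in> Gs" using Cons.prems l by simp
  have gx: "pgen R x \<in> pgen R ` Gs" using x by blast
  have "pres_class R [l] \<in> generate (presented_group Gs R) (pgen R ` Gs)"
  proof (cases b)
    case True
    have "pgen R x \<in> generate (presented_group Gs R) (pgen R ` Gs)" by (rule generate.incl[OF gx])
    then show ?thesis using True l by (simp add: pgen_def)
  next
    case False
    have "inv\<^bsub>presented_group Gs R\<^esub> pgen R x \<in> generate (presented_group Gs R) (pgen R ` Gs)"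
      by (rule generate.inv[OF gx])
    then show ?thesis using False l pgen_inv[OF x, of R] by simp
  qed
  moreover have "pres_class R w \<in> generate (presented_group Gs R) (pgen R ` Gs)"
    using Cons.IH Cons.prems by simp
  ultimately have "pres_class R [l] \<otimes>\<^bsub>presented_group Gs R\<^esub> pres_class R w
     \<in> generate (presented_group Gs R) (pgen R ` Gs)" by (rule generate.eng)
  then show ?case by (simp add: pres_mult)
qed

lemma pres_generate: "carrier (presented_group Gs R) = generate (presented_group Gs R) (pgen R ` Gs)"
proof -
  interpret P: group "presented_group Gs R" by (rule presented_group_is_group)
  have sub: "pgen R ` Gs \<subseteq> carrier (presented_group Gs R)" by (simp add: image_subset_iff pgen_carrier)
  have 1: "generate (presented_group Gs R) (pgen R ` Gs) \<subseteq> carrier (presented_group Gs R)"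
    by (rule P.generate_incl[OF sub])
  have 2: "carrier (presented_group Gs R) \<subseteq> generate (presented_group Gs R) (pgen R ` Gs)"
  proof
    fix A assume "A \<in> carrier (presented_group Gs R)"
    then obtain w where A: "A = pres_class R w" "word_over Gs w" unfolding pres_carrier by blast
    show "A \<in> generate (presented_group Gs R) (pgen R ` Gs)" unfolding A(1) by (rule pres_word_generate[OF A(2)])
  qed
  from 1 2 show ?thesis by blast
qed

lemma hom_inv_gen:
  "\<lbrakk>h \<in> hom G H; x \<in> carrier G; group G; group H\<rbrakk> \<Longrightarrow> h (inv\<^bsub>G\<^esub> x) = inv\<^bsub>H\<^esub> (h x)"
  by (simp add: group_hom.hom_inv group_hom_axioms_def group_hom_def)

lemma pres_hom_eqI:
  assumes "group H" "h1 \<in> hom (presented_group Gs R) H" "h2 \<in> hom (presented_group Gs R) H"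
    and "\<And>x. x \<in> Gs \<Longrightarrow> h1 (pgen R x) = h2 (pgen R x)"
    and "A \<in> carrier (presented_group Gs R)"
  shows "h1 A = h2 A"
proof -
  interpret P: group "presented_group Gs R" by (rule presented_group_is_group)
  interpret H: group H by fact
  have sub: "pgen R ` Gs \<subseteq> carrier (presented_group Gs R)" by (simp add: image_subset_iff pgen_carrier)
  have "A \<in> generate (presented_group Gs R) (pgen R ` Gs)" using assms(5) pres_generate by blast
  then show ?thesis
  proof (induction rule: generate.induct)
    case one then show ?case using assms(1,2,3) P.group_axioms by (simp add: hom_one)
  next
    case (incl h) then show ?case using assms(4) by auto
  next
    case (inv h) then obtain x where x: "x \<in> Gs" "h = pgen R x" by auto
    then show ?case using assms(1,2,3,4) pgen_carrier[OF x(1)] P.group_axioms by (simp add: hom_inv_gen)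
  next
    case (eng a b)
    then show ?case using assms(2,3) P.generate_in_carrier[OF sub] by (simp add: hom_mult)
  qed
qed


definition tn :: "('a, 'b) monoid_scheme \<Rightarrow> 'a \<Rightarrow> 'a \<Rightarrow> ('a \<times> 'a) word set" where
  "tn G g h = pgen (tensor_relators G) (g, h)"

definition tensor_lift :: "('a, 'b) monoid_scheme \<Rightarrow> ('c, 'd) monoid_scheme \<Rightarrow> ('a \<Rightarrow> 'a \<Rightarrow> 'c)
   \<Rightarrow> ('a \<times> 'a) word set \<Rightarrow> 'c" where
  "tensor_lift G H f = pres_hom H (\<lambda>p. if fst p \<in> carrier G \<and> snd p \<in> carrier G then f (fst p) (snd p) else \<one>\<^bsub>H\<^esub>)"

lemma pres_class3: "pres_class R [a, b, c] =
  pres_class R [a] \<otimes>\<^bsub>presented_group Gs R\<^esub> (pres_class R [b] \<otimes>\<^bsub>presented_group Gs R\<^esub> pres_class R [c])"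
  by (simp add: pres_mult)

lemma group_solve3:
  assumes "group H" "a \<in> carrier H" "b \<in> carrier H" "c \<in> carrier H"
    "a \<otimes>\<^bsub>H\<^esub> (inv\<^bsub>H\<^esub> b \<otimes>\<^bsub>H\<^esub> inv\<^bsub>H\<^esub> c) = \<one>\<^bsub>H\<^esub>"
  shows "a = c \<otimes>\<^bsub>H\<^esub> b"
proof -
  interpret H: group H by fact
  have "inv\<^bsub>H\<^esub> (inv\<^bsub>H\<^esub> b \<otimes>\<^bsub>H\<^esub> inv\<^bsub>H\<^esub> c) = a"
    using assms by (intro H.inv_equality) auto
  then show ?thesis using assms by (simp add: H.inv_mult_group)
qed

context group
begin

lemma gc1[simp]: "x \<in> carrier G \<Longrightarrow> y \<in> carrier G \<Longrightarrow> x \<otimes> (inv x \<otimes> y) = y"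
  by (simp add: m_assoc[symmetric])

lemma gc2[simp]: "x \<in> carrier G \<Longrightarrow> y \<in> carrier G \<Longrightarrow> inv x \<otimes> (x \<otimes> y) = y"
  by (simp add: m_assoc[symmetric])

lemma conj_hom: "c \<in> carrier G \<Longrightarrow> (\<lambda>s. c \<otimes> s \<otimes> inv c) \<in> hom G G"
  by (rule homI) (auto simp: m_assoc)

end

locale tsq = group G for G (structure)
begin

abbreviation T where "T \<equiv> tensor_square G"

lemma T_def': "T = presented_group (Sigma (carrier G) (\<lambda>_. carrier G)) (tensor_relators G)"
  by (simp add: tensor_square_def)

sublocale T: group T
  unfolding T_def' by (rule presented_group_is_group)

lemma gconj_closed[simp]: "g \<in> carrier G \<Longrightarrow> h \<in> carrier G \<Longrightarrow> gconj G g h \<in> carrier G"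
  by (simp add: gconj_def)

lemma tn_carrier[simp]: "g \<in> carrier G \<Longrightarrow> h \<in> carrier G \<Longrightarrow> tn G g h \<in> carrier T"
  unfolding tn_def T_def' by (rule pgen_carrier) simp

lemma tn_inv: "g \<in> carrier G \<Longrightarrow> h \<in> carrier G \<Longrightarrow>
   inv\<^bsub>T\<^esub> tn G g h = pres_class (tensor_relators G) [((g, h), False)]"
  unfolding tn_def T_def' by (rule pgen_inv) simp

lemma pres_mult_T: "pres_class (tensor_relators G) u \<otimes>\<^bsub>T\<^esub> pres_class (tensor_relators G) v
   = pres_class (tensor_relators G) (u @ v)"
  unfolding T_def' by (rule pres_mult)

lemma pres_one_T: "\<one>\<^bsub>T\<^esub> = pres_class (tensor_relators G) []"
  unfolding T_def' by (rule pres_one)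

lemma R1: assumes "g \<in> carrier G" "g' \<in> carrier G" "h \<in> carrier G"
  shows "tn G (g \<otimes> g') h = tn G (gconj G g g') (gconj G g h) \<otimes>\<^bsub>T\<^esub> tn G g h"
proof -
  let ?r = "[((g \<otimes> g', h), True), ((g, h), False), ((gconj G g g', gconj G g h), False)]"
  have "?r \<in> tensor_relators G" using assms unfolding tensor_relators_def by blast
  then have "pres_class (tensor_relators G) ?r = \<one>\<^bsub>T\<^esub>" unfolding T_def' by (rule pres_relator)
  moreover have "tn G (g \<otimes> g') h \<otimes>\<^bsub>T\<^esub> (inv\<^bsub>T\<^esub> tn G g h \<otimes>\<^bsub>T\<^esub> inv\<^bsub>T\<^esub> tn G (gconj G g g') (gconj G g h)) = pres_class (tensor_relators G) ?r"
    using assms by (simp only: tn_inv gconj_closed m_closed) (simp add: tn_def pgen_def pres_mult_T)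
  ultimately have "tn G (g \<otimes> g') h \<otimes>\<^bsub>T\<^esub> (inv\<^bsub>T\<^esub> tn G g h \<otimes>\<^bsub>T\<^esub> inv\<^bsub>T\<^esub> tn G (gconj G g g') (gconj G g h)) = \<one>\<^bsub>T\<^esub>" by simp
  then show ?thesis using assms
    by (intro group_solve3[OF T.group_axioms]) auto
qed

lemma R2: assumes "g \<in> carrier G" "h \<in> carrier G" "h' \<in> carrier G"
  shows "tn G g (h \<otimes> h') = tn G g h \<otimes>\<^bsub>T\<^esub> tn G (gconj G h g) (gconj G h h')"
proof -
  let ?r = "[((g, h \<otimes> h'), True), ((gconj G h g, gconj G h h'), False), ((g, h), False)]"
  have "?r \<in> tensor_relators G" using assms unfolding tensor_relators_def by blast
  then have "pres_class (tensor_relators G) ?r = \<one>\<^bsub>T\<^esub>" unfolding T_def' by (rule pres_relator)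
  moreover have "tn G g (h \<otimes> h') \<otimes>\<^bsub>T\<^esub> (inv\<^bsub>T\<^esub> tn G (gconj G h g) (gconj G h h') \<otimes>\<^bsub>T\<^esub> inv\<^bsub>T\<^esub> tn G g h) = pres_class (tensor_relators G) ?r"
    using assms by (simp only: tn_inv gconj_closed m_closed) (simp add: tn_def pgen_def pres_mult_T)
  ultimately have "tn G g (h \<otimes> h') \<otimes>\<^bsub>T\<^esub> (inv\<^bsub>T\<^esub> tn G (gconj G h g) (gconj G h h') \<otimes>\<^bsub>T\<^esub> inv\<^bsub>T\<^esub> tn G g h) = \<one>\<^bsub>T\<^esub>" by simp
  then show ?thesis using assms
    by (intro group_solve3[OF T.group_axioms]) auto
qed

end


definition comm :: "('a, 'b) monoid_scheme \<Rightarrow> 'a \<Rightarrow> 'a \<Rightarrow> 'a" where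
  "comm G g h = g \<otimes>\<^bsub>G\<^esub> h \<otimes>\<^bsub>G\<^esub> inv\<^bsub>G\<^esub> g \<otimes>\<^bsub>G\<^esub> inv\<^bsub>G\<^esub> h"

definition act :: "('a, 'b) monoid_scheme \<Rightarrow> 'a \<Rightarrow> ('a \<times> 'a) word set \<Rightarrow> ('a \<times> 'a) word set" where
  "act G x = tensor_lift G (tensor_square G) (\<lambda>g h. tn G (gconj G x g) (gconj G x h))"

definition kappa :: "('a, 'b) monoid_scheme \<Rightarrow> ('a \<times> 'a) word set \<Rightarrow> 'a" where
  "kappa G = tensor_lift G G (comm G)"

context tsq
begin

lemma comm_closed[simp]: "g \<in> carrier G \<Longrightarrow> h \<in> carrier G \<Longrightarrow> comm G g h \<in> carrier G"
  by (simp add: comm_def)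

lemma gconj_mult: "x \<in> carrier G \<Longrightarrow> a \<in> carrier G \<Longrightarrow> b \<in> carrier G \<Longrightarrow>
  gconj G x (a \<otimes> b) = gconj G x a \<otimes> gconj G x b"
  by (simp add: gconj_def m_assoc)

lemma gconj_gconj: "x \<in> carrier G \<Longrightarrow> a \<in> carrier G \<Longrightarrow> b \<in> carrier G \<Longrightarrow>
  gconj G x (gconj G a b) = gconj G (gconj G x a) (gconj G x b)"
  by (simp add: gconj_def m_assoc inv_mult_group)

lemma gconj_gconj2: "x \<in> carrier G \<Longrightarrow> y \<in> carrier G \<Longrightarrow> b \<in> carrier G \<Longrightarrow>
  gconj G x (gconj G y b) = gconj G (x \<otimes> y) b"
  by (simp add: gconj_def m_assoc inv_mult_group)

lemma gconj_one[simp]: "b \<in> carrier G \<Longrightarrow> gconj G \<one> b = b"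
  by (simp add: gconj_def)

lemma T_induct[consumes 1, case_names one gen inv mult]:
  assumes "A \<in> carrier T" "P \<one>\<^bsub>T\<^esub>"
    "\<And>g h. g \<in> carrier G \<Longrightarrow> h \<in> carrier G \<Longrightarrow> P (tn G g h)"
    "\<And>g h. g \<in> carrier G \<Longrightarrow> h \<in> carrier G \<Longrightarrow> P (inv\<^bsub>T\<^esub> tn G g h)"
    "\<And>a b. a \<in> carrier T \<Longrightarrow> b \<in> carrier T \<Longrightarrow> P a \<Longrightarrow> P b \<Longrightarrow> P (a \<otimes>\<^bsub>T\<^esub> b)"
  shows "P A"
proof -
  let ?Gs = "Sigma (carrier G) (\<lambda>_. carrier G)" and ?R = "tensor_relators G"
  have sub: "pgen ?R ` ?Gs \<subseteq> carrier T" unfolding T_def' by (simp add: image_subset_iff pgen_carrier)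
  have "A \<in> generate T (pgen ?R ` ?Gs)" using assms(1) pres_generate[of ?Gs ?R] unfolding T_def' by blast
  then show ?thesis
  proof (induction rule: generate.induct)
    case one then show ?case by (rule assms(2))
  next
    case (incl h) then show ?case using assms(3) by (auto simp: tn_def)
  next
    case (inv h) then show ?case using assms(4) by (auto simp: tn_def)
  next
    case (eng h1 h2) then show ?case using assms(5) T.generate_in_carrier[OF sub] by blast
  qed
qed

lemma T_hom_eqI:
  assumes "group H" "h1 \<in> hom T H" "h2 \<in> hom T H"
    and "\<And>g h. g \<in> carrier G \<Longrightarrow> h \<in> carrier G \<Longrightarrow> h1 (tn G g h) = h2 (tn G g h)"
    and "A \<in> carrier T"
  shows "h1 A = h2 A"
  using assms(5)
proof (induction rule: T_induct)
  case one then show ?case using assms(1,2,3) T.group_axioms by (simp add: hom_one)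
next
  case (gen g h) then show ?case by (rule assms(4))
next
  case (inv g h) then show ?case using assms(1,2,3,4) T.group_axioms by (simp add: hom_inv_gen)
next
  case (mult a b) then show ?case using assms(2,3) by (simp add: hom_mult)
qed

lemma tensor_lift:
  assumes "group H"
    and f_carr: "\<And>g h. g \<in> carrier G \<Longrightarrow> h \<in> carrier G \<Longrightarrow> f g h \<in> carrier H"
    and LR1: "\<And>g g' h. g \<in> carrier G \<Longrightarrow> g' \<in> carrier G \<Longrightarrow> h \<in> carrier G \<Longrightarrow>
       f (g \<otimes> g') h = f (gconj G g g') (gconj G g h) \<otimes>\<^bsub>H\<^esub> f g h"
    and LR2: "\<And>g h h'. g \<in> carrier G \<Longrightarrow> h \<in> carrier G \<Longrightarrow> h' \<in> carrier G \<Longrightarrow>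
       f g (h \<otimes> h') = f g h \<otimes>\<^bsub>H\<^esub> f (gconj G h g) (gconj G h h')"
  shows "tensor_lift G H f \<in> hom T H"
    and "g \<in> carrier G \<Longrightarrow> h \<in> carrier G \<Longrightarrow> tensor_lift G H f (tn G g h) = f g h"
proof -
  interpret H: group H by fact
  let ?F = "\<lambda>p. if fst p \<in> carrier G \<and> snd p \<in> carrier G then f (fst p) (snd p) else \<one>\<^bsub>H\<^esub>"
  have F: "\<And>x. ?F x \<in> carrier H" using f_carr by auto
  have rel: "wev H ?F r = \<one>\<^bsub>H\<^esub>" if "r \<in> tensor_relators G" for r
  proof -
    from that consider
      (a) g g' h where "r = [((g \<otimes> g', h), True), ((g, h), False), ((gconj G g g', gconj G g h), False)]"
        "g \<in> carrier G" "g' \<in> carrier G" "h \<in> carrier G"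
    | (b) g h h' where "r = [((g, h \<otimes> h'), True), ((gconj G h g, gconj G h h'), False), ((g, h), False)]"
        "g \<in> carrier G" "h \<in> carrier G" "h' \<in> carrier G"
      unfolding tensor_relators_def by blast
    then show ?thesis
    proof cases
      case a then show ?thesis using f_carr by (simp add: LR1 H.m_assoc)
    next
      case b then show ?thesis using f_carr by (simp add: LR2 H.m_assoc)
    qed
  qed
  show "tensor_lift G H f \<in> hom T H"
    unfolding tensor_lift_def T_def' by (rule pres_hom_hom[OF assms(1) F rel])
  show "g \<in> carrier G \<Longrightarrow> h \<in> carrier G \<Longrightarrow> tensor_lift G H f (tn G g h) = f g h"
    unfolding tensor_lift_def tn_def by (subst pres_hom_gen[OF assms(1) F rel]) auto
qed

lemma act_hom: "x \<in> carrier G \<Longrightarrow> act G x \<in> hom T T"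
  and act_tn: "x \<in> carrier G \<Longrightarrow> g \<in> carrier G \<Longrightarrow> h \<in> carrier G \<Longrightarrow>
     act G x (tn G g h) = tn G (gconj G x g) (gconj G x h)"
proof -
  assume x: "x \<in> carrier G"
  have L: "tensor_lift G T (\<lambda>g h. tn G (gconj G x g) (gconj G x h)) \<in> hom T T \<and>
    (\<forall>g\<in>carrier G. \<forall>h\<in>carrier G. tensor_lift G T (\<lambda>g h. tn G (gconj G x g) (gconj G x h)) (tn G g h)
       = tn G (gconj G x g) (gconj G x h))"
  proof (intro conjI ballI)
    show "tensor_lift G T (\<lambda>g h. tn G (gconj G x g) (gconj G x h)) \<in> hom T T"
      and "\<And>g h. g \<in> carrier G \<Longrightarrow> h \<in> carrier G \<Longrightarrow>
        tensor_lift G T (\<lambda>g h. tn G (gconj G x g) (gconj G x h)) (tn G g h) = tn G (gconj G x g) (gconj G x h)"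
      by (rule tensor_lift[OF T.group_axioms], simp add: x,
          simp add: x gconj_mult gconj_gconj[symmetric] R1, simp add: x gconj_mult gconj_gconj[symmetric] R2)+
  qed
  then show "act G x \<in> hom T T" unfolding act_def by blast
  show "g \<in> carrier G \<Longrightarrow> h \<in> carrier G \<Longrightarrow> act G x (tn G g h) = tn G (gconj G x g) (gconj G x h)"
    using L unfolding act_def by blast
qed

lemma act_carrier[simp]: "x \<in> carrier G \<Longrightarrow> t \<in> carrier T \<Longrightarrow> act G x t \<in> carrier T"
  by (rule hom_in_carrier[OF act_hom])

lemma act_mult: "x \<in> carrier G \<Longrightarrow> t \<in> carrier T \<Longrightarrow> s \<in> carrier T \<Longrightarrow>
   act G x (t \<otimes>\<^bsub>T\<^esub> s) = act G x t \<otimes>\<^bsub>T\<^esub> act G x s"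
  by (rule hom_mult[OF act_hom])

lemma act_inv: "x \<in> carrier G \<Longrightarrow> t \<in> carrier T \<Longrightarrow> act G x (inv\<^bsub>T\<^esub> t) = inv\<^bsub>T\<^esub> act G x t"
  by (rule hom_inv_gen[OF act_hom _ T.group_axioms T.group_axioms])

lemma act_one_T[simp]: "x \<in> carrier G \<Longrightarrow> act G x \<one>\<^bsub>T\<^esub> = \<one>\<^bsub>T\<^esub>"
  by (rule hom_one[OF act_hom T.group_axioms T.group_axioms])

lemma act_act: assumes "x \<in> carrier G" "y \<in> carrier G" "t \<in> carrier T"
  shows "act G x (act G y t) = act G (x \<otimes> y) t"
proof -
  have h: "(\<lambda>t. act G x (act G y t)) \<in> hom T T"
    using assms by (intro homI) (simp_all add: act_mult)
  show ?thesis
    using T_hom_eqI[of T "\<lambda>t. act G x (act G y t)" "act G (x \<otimes> y)", OF T.group_axioms h act_hom _ assms(3)]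
      assms by (simp add: act_tn gconj_gconj2)
qed

lemma act_1: assumes "t \<in> carrier T" shows "act G \<one> t = t"
proof -
  have h: "(\<lambda>t. t) \<in> hom T T" by (rule homI) auto
  show ?thesis
    using T_hom_eqI[of T "act G \<one>" "\<lambda>t. t", OF T.group_axioms act_hom h _ assms]
    by (simp add: act_tn)
qed

lemma R1': assumes "g \<in> carrier G" "g' \<in> carrier G" "h \<in> carrier G"
  shows "tn G (g \<otimes> g') h = act G g (tn G g' h) \<otimes>\<^bsub>T\<^esub> tn G g h"
  using assms by (simp add: R1 act_tn)

lemma R2': assumes "g \<in> carrier G" "h \<in> carrier G" "h' \<in> carrier G"
  shows "tn G g (h \<otimes> h') = tn G g h \<otimes>\<^bsub>T\<^esub> act G h (tn G g h')"
  using assms by (simp add: R2 act_tn)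

lemma tn_one_left[simp]: assumes "h \<in> carrier G" shows "tn G \<one> h = \<one>\<^bsub>T\<^esub>"
proof -
  have "tn G \<one> h = tn G \<one> h \<otimes>\<^bsub>T\<^esub> tn G \<one> h"
    using R1'[of \<one> \<one> h] assms by (simp add: act_1)
  then show ?thesis using assms by simp
qed

lemma tn_one_right[simp]: assumes "g \<in> carrier G" shows "tn G g \<one> = \<one>\<^bsub>T\<^esub>"
proof -
  have "tn G g \<one> = tn G g \<one> \<otimes>\<^bsub>T\<^esub> tn G g \<one>"
    using R2'[of g \<one> \<one>] assms by (simp add: act_1)
  then show ?thesis using assms by simp
qed

lemma kappa_hom: "kappa G \<in> hom T G"
  and kappa_tn: "g \<in> carrier G \<Longrightarrow> h \<in> carrier G \<Longrightarrow> kappa G (tn G g h) = comm G g h"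
  unfolding kappa_def
  by (rule tensor_lift[OF group_axioms], simp,
      simp add: comm_def gconj_def m_assoc inv_mult_group,
      simp add: comm_def gconj_def m_assoc inv_mult_group)+

lemma kappa_carrier[simp]: "t \<in> carrier T \<Longrightarrow> kappa G t \<in> carrier G"
  by (rule hom_in_carrier[OF kappa_hom])

lemma I2_gen:
  assumes "g \<in> carrier G" "h \<in> carrier G" "g' \<in> carrier G" "h' \<in> carrier G"
  shows "act G g (act G h (tn G g' h')) \<otimes>\<^bsub>T\<^esub> tn G g h = tn G g h \<otimes>\<^bsub>T\<^esub> act G h (act G g (tn G g' h'))"
proof -
  define A where "A = act G g (tn G g' h)"
  define B where "B = act G g (act G h (tn G g' h'))"
  define C where "C = tn G g h"
  define D where "D = act G h (tn G g h')"
  define B' where "B' = act G h (act G g (tn G g' h'))"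
  have c: "A \<in> carrier T" "B \<in> carrier T" "C \<in> carrier T" "D \<in> carrier T" "B' \<in> carrier T"
    using assms by (simp_all add: A_def B_def C_def D_def B'_def)
  have "tn G (g \<otimes> g') (h \<otimes> h') = act G g (tn G g' (h \<otimes> h')) \<otimes>\<^bsub>T\<^esub> tn G g (h \<otimes> h')"
    using assms by (intro R1') auto
  also have "\<dots> = A \<otimes>\<^bsub>T\<^esub> B \<otimes>\<^bsub>T\<^esub> (C \<otimes>\<^bsub>T\<^esub> D)"
    using assms by (simp add: R2'[of g' h h'] R2'[of g h h'] act_mult A_def B_def C_def D_def)
  finally have e1: "tn G (g \<otimes> g') (h \<otimes> h') = A \<otimes>\<^bsub>T\<^esub> B \<otimes>\<^bsub>T\<^esub> (C \<otimes>\<^bsub>T\<^esub> D)" .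
  have "tn G (g \<otimes> g') (h \<otimes> h') = tn G (g \<otimes> g') h \<otimes>\<^bsub>T\<^esub> act G h (tn G (g \<otimes> g') h')"
    using assms by (intro R2') auto
  also have "\<dots> = A \<otimes>\<^bsub>T\<^esub> C \<otimes>\<^bsub>T\<^esub> (B' \<otimes>\<^bsub>T\<^esub> D)"
    using assms by (simp add: R1'[of g g' h] R1'[of g g' h'] act_mult A_def B'_def C_def D_def)
  finally have e2: "tn G (g \<otimes> g') (h \<otimes> h') = A \<otimes>\<^bsub>T\<^esub> C \<otimes>\<^bsub>T\<^esub> (B' \<otimes>\<^bsub>T\<^esub> D)" .
  from e1 e2 have eq: "A \<otimes>\<^bsub>T\<^esub> B \<otimes>\<^bsub>T\<^esub> (C \<otimes>\<^bsub>T\<^esub> D) = A \<otimes>\<^bsub>T\<^esub> C \<otimes>\<^bsub>T\<^esub> (B' \<otimes>\<^bsub>T\<^esub> D)"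
    by simp
  have "A \<otimes>\<^bsub>T\<^esub> (B \<otimes>\<^bsub>T\<^esub> C \<otimes>\<^bsub>T\<^esub> D) = A \<otimes>\<^bsub>T\<^esub> (C \<otimes>\<^bsub>T\<^esub> B' \<otimes>\<^bsub>T\<^esub> D)"
    using eq c by (simp add: T.m_assoc)
  then have "B \<otimes>\<^bsub>T\<^esub> C \<otimes>\<^bsub>T\<^esub> D = C \<otimes>\<^bsub>T\<^esub> B' \<otimes>\<^bsub>T\<^esub> D"
    using c by simp
  then have "B \<otimes>\<^bsub>T\<^esub> C = C \<otimes>\<^bsub>T\<^esub> B'" using c by simp
  then show ?thesis by (simp add: B_def C_def B'_def)
qed

lemma I2_tn:
  assumes "g \<in> carrier G" "h \<in> carrier G" "a \<in> carrier G" "b \<in> carrier G"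
  shows "tn G g h \<otimes>\<^bsub>T\<^esub> tn G a b \<otimes>\<^bsub>T\<^esub> inv\<^bsub>T\<^esub> tn G g h = act G (comm G g h) (tn G a b)"
proof -
  define y where "y = inv (h \<otimes> g)"
  have y: "y \<in> carrier G" using assms by (simp add: y_def)
  have "act G g (act G h (tn G (gconj G y a) (gconj G y b))) \<otimes>\<^bsub>T\<^esub> tn G g h
      = tn G g h \<otimes>\<^bsub>T\<^esub> act G h (act G g (tn G (gconj G y a) (gconj G y b)))"
    using assms y by (intro I2_gen) auto
  moreover have "act G h (act G g (tn G (gconj G y a) (gconj G y b))) = tn G a b"
  proof -
    have "act G h (act G g (tn G (gconj G y a) (gconj G y b))) = act G h (act G g (act G y (tn G a b)))"
      using assms y by (simp add: act_tn)
    also have "\<dots> = act G (h \<otimes> g \<otimes> y) (tn G a b)"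
      using assms y by (simp add: act_act m_assoc)
    also have "h \<otimes> g \<otimes> y = \<one>" using assms by (simp add: y_def)
    finally show ?thesis using assms by (simp add: act_1)
  qed
  moreover have "act G g (act G h (tn G (gconj G y a) (gconj G y b))) = act G (comm G g h) (tn G a b)"
    using assms y by (simp add: act_act act_tn gconj_gconj2 y_def comm_def m_assoc inv_mult_group)
  ultimately have "act G (comm G g h) (tn G a b) \<otimes>\<^bsub>T\<^esub> tn G g h = tn G g h \<otimes>\<^bsub>T\<^esub> tn G a b" by simp
  then show ?thesis using assms
    by (subst T.inv_solve_right') auto
qed

end


context tsq
begin

lemma kappa_one: "kappa G \<one>\<^bsub>T\<^esub> = \<one>"
  by (rule hom_one[OF kappa_hom T.group_axioms group_axioms])

lemma kappa_mult: "a \<in> carrier T \<Longrightarrow> b \<in> carrier T \<Longrightarrow> kappa G (a \<otimes>\<^bsub>T\<^esub> b) = kappa G a \<otimes> kappa G b"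
  by (rule hom_mult[OF kappa_hom])

lemma kappa_inv: "a \<in> carrier T \<Longrightarrow> kappa G (inv\<^bsub>T\<^esub> a) = inv (kappa G a)"
  by (rule hom_inv_gen[OF kappa_hom _ T.group_axioms group_axioms])

lemma I2: assumes "g \<in> carrier G" "h \<in> carrier G" "s \<in> carrier T"
  shows "tn G g h \<otimes>\<^bsub>T\<^esub> s \<otimes>\<^bsub>T\<^esub> inv\<^bsub>T\<^esub> tn G g h = act G (comm G g h) s"
proof -
  have h: "(\<lambda>s. tn G g h \<otimes>\<^bsub>T\<^esub> s \<otimes>\<^bsub>T\<^esub> inv\<^bsub>T\<^esub> tn G g h) \<in> hom T T"
    using assms by (intro T.conj_hom) simp
  show ?thesis
    using T_hom_eqI[of T "\<lambda>s. tn G g h \<otimes>\<^bsub>T\<^esub> s \<otimes>\<^bsub>T\<^esub> inv\<^bsub>T\<^esub> tn G g h" "act G (comm G g h)",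
        OF T.group_axioms h act_hom _ assms(3)] assms
    by (simp add: I2_tn)
qed

lemma F2: assumes "t \<in> carrier T" "s \<in> carrier T"
  shows "t \<otimes>\<^bsub>T\<^esub> s \<otimes>\<^bsub>T\<^esub> inv\<^bsub>T\<^esub> t = act G (kappa G t) s"
  using assms(1,2)
proof (induction t arbitrary: s rule: T_induct)
  case one then show ?case by (simp add: kappa_one act_1)
next
  case (gen g h) then show ?case by (simp add: I2 kappa_tn)
next
  case (inv g h)
  define k where "k = comm G g h"
  have k: "k \<in> carrier G" using inv by (simp add: k_def)
  define s' where "s' = act G (inv k) s"
  have s': "s' \<in> carrier T" using k inv by (simp add: s'_def)
  have "tn G g h \<otimes>\<^bsub>T\<^esub> s' \<otimes>\<^bsub>T\<^esub> inv\<^bsub>T\<^esub> tn G g h = s"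
    using inv k s' by (simp add: I2 k_def[symmetric] s'_def act_act act_1)
  then have "inv\<^bsub>T\<^esub> tn G g h \<otimes>\<^bsub>T\<^esub> s \<otimes>\<^bsub>T\<^esub> tn G g h = s'"
    using inv s' by (auto simp: T.m_assoc)
  then show ?case using inv by (simp add: kappa_inv kappa_tn k_def s'_def)
next
  case (mult a b)
  have "a \<otimes>\<^bsub>T\<^esub> b \<otimes>\<^bsub>T\<^esub> s \<otimes>\<^bsub>T\<^esub> inv\<^bsub>T\<^esub> (a \<otimes>\<^bsub>T\<^esub> b)
      = a \<otimes>\<^bsub>T\<^esub> (b \<otimes>\<^bsub>T\<^esub> s \<otimes>\<^bsub>T\<^esub> inv\<^bsub>T\<^esub> b) \<otimes>\<^bsub>T\<^esub> inv\<^bsub>T\<^esub> a"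
    using mult(1,2,5) by (simp add: T.m_assoc T.inv_mult_group)
  also have "\<dots> = a \<otimes>\<^bsub>T\<^esub> act G (kappa G b) s \<otimes>\<^bsub>T\<^esub> inv\<^bsub>T\<^esub> a"
    using mult(4)[of s] mult(5) by simp
  also have "\<dots> = act G (kappa G a) (act G (kappa G b) s)"
    using mult(3)[of "act G (kappa G b) s"] mult by simp
  finally show ?case using mult by (simp add: act_act kappa_mult)
qed

lemma GF: assumes "a \<in> carrier G" "b \<in> carrier G" "c \<in> carrier G"
  shows "act G a (tn G b c) = tn G a (gconj G b c) \<otimes>\<^bsub>T\<^esub> tn G b c \<otimes>\<^bsub>T\<^esub> inv\<^bsub>T\<^esub> tn G a c"
proof -
  have e1: "tn G (a \<otimes> b) c = act G a (tn G b c) \<otimes>\<^bsub>T\<^esub> tn G a c"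
    using assms by (intro R1') auto
  have ab: "a \<otimes> b = b \<otimes> (inv b \<otimes> a \<otimes> b)" using assms by (simp add: m_assoc)
  have gb: "gconj G b (inv b \<otimes> a \<otimes> b) = a" using assms by (simp add: gconj_def m_assoc)
  have "tn G (a \<otimes> b) c = act G b (tn G (inv b \<otimes> a \<otimes> b) c) \<otimes>\<^bsub>T\<^esub> tn G b c"
    unfolding ab using assms by (intro R1') auto
  also have "\<dots> = tn G a (gconj G b c) \<otimes>\<^bsub>T\<^esub> tn G b c"
    using assms by (simp add: act_tn gb)
  finally have "act G a (tn G b c) \<otimes>\<^bsub>T\<^esub> tn G a c = tn G a (gconj G b c) \<otimes>\<^bsub>T\<^esub> tn G b c"
    using e1 by simp
  then show ?thesis using assms by (simp add: T.inv_solve_right)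
qed

lemma XI: assumes "x \<in> carrier G" "n \<in> carrier G" "g \<in> carrier G"
  shows "act G x (tn G n g) = tn G x (comm G n g) \<otimes>\<^bsub>T\<^esub> tn G n g"
proof -
  have ng: "gconj G n g = comm G n g \<otimes> g" using assms by (simp add: gconj_def comm_def m_assoc)
  have "act G x (tn G n g) = tn G x (comm G n g \<otimes> g) \<otimes>\<^bsub>T\<^esub> tn G n g \<otimes>\<^bsub>T\<^esub> inv\<^bsub>T\<^esub> tn G x g"
    using GF[OF assms] ng by simp
  also have "tn G x (comm G n g \<otimes> g) = tn G x (comm G n g) \<otimes>\<^bsub>T\<^esub> act G (comm G n g) (tn G x g)"
    using assms by (intro R2') auto
  also have "act G (comm G n g) (tn G x g) = tn G n g \<otimes>\<^bsub>T\<^esub> tn G x g \<otimes>\<^bsub>T\<^esub> inv\<^bsub>T\<^esub> tn G n g"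
    using assms by (simp add: I2)
  finally show ?thesis using assms by (simp add: T.m_assoc)
qed

end


definition tri :: "nat \<Rightarrow> nat" where "tri n = n * (n - 1) div 2"

lemma tri_Suc: "tri (Suc n) = tri n + n"
proof -
  have "even (n * (n - 1))" by (cases n) auto
  moreover have "Suc n * n = n * (n - 1) + 2 * n" by (cases n) auto
  ultimately show ?thesis unfolding tri_def by auto
qed

lemma tri_0[simp]: "tri 0 = 0" by (simp add: tri_def)

context group
begin

lemma pow_comm1: "x \<in> carrier G \<Longrightarrow> x \<otimes> x [^] (n::nat) = x [^] n \<otimes> x"
  using nat_pow_Suc2[of x n] by simp

lemma central_pow:
  assumes "z \<in> carrier G" "\<And>q. q \<in> carrier G \<Longrightarrow> z \<otimes> q = q \<otimes> z" "q \<in> carrier G"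
  shows "z [^] (m::nat) \<otimes> q = q \<otimes> z [^] m"
proof (induction m)
  case 0 then show ?case using assms by simp
next
  case (Suc m)
  have "z [^] Suc m \<otimes> q = z [^] m \<otimes> (z \<otimes> q)" using assms by (simp add: m_assoc)
  also have "\<dots> = z [^] m \<otimes> (q \<otimes> z)" using assms by simp
  also have "\<dots> = (z [^] m \<otimes> q) \<otimes> z" using assms by (simp add: m_assoc)
  also have "\<dots> = q \<otimes> z [^] Suc m" using Suc assms by (simp add: m_assoc)
  finally show ?case .
qed

lemma pow_comm2:
  assumes c: "a \<in> carrier G" "b \<in> carrier G" "z \<in> carrier G"
    and zc: "\<And>q. q \<in> carrier G \<Longrightarrow> z \<otimes> q = q \<otimes> z"
    and ba: "b \<otimes> a = z \<otimes> (a \<otimes> b)"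
  shows "(a \<otimes> b) [^] (n::nat) = z [^] tri n \<otimes> (a [^] n \<otimes> b [^] n)"
proof -
  have sub: "b [^] m \<otimes> a = z [^] m \<otimes> (a \<otimes> b [^] m)" for m :: nat
  proof (induction m)
    case 0 then show ?case using c by simp
  next
    case (Suc m)
    have "b [^] Suc m \<otimes> a = b [^] m \<otimes> (b \<otimes> a)" using c by (simp add: nat_pow_Suc2 m_assoc)
    also have "\<dots> = b [^] m \<otimes> (z \<otimes> (a \<otimes> b))" using ba by simp
    also have "\<dots> = (b [^] m \<otimes> z) \<otimes> (a \<otimes> b)" using c by (simp add: m_assoc)
    also have "\<dots> = (z \<otimes> b [^] m) \<otimes> (a \<otimes> b)" using c zc by simp
    also have "\<dots> = z \<otimes> ((b [^] m \<otimes> a) \<otimes> b)" using c by (simp add: m_assoc)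
    also have "\<dots> = z \<otimes> ((z [^] m \<otimes> (a \<otimes> b [^] m)) \<otimes> b)" using Suc by simp
    also have "\<dots> = (z \<otimes> z [^] m) \<otimes> (a \<otimes> (b [^] m \<otimes> b))" using c by (simp add: m_assoc)
    also have "\<dots> = z [^] Suc m \<otimes> (a \<otimes> b [^] Suc m)" using c by (simp add: nat_pow_Suc2[symmetric])
    finally show ?case .
  qed
  show ?thesis
  proof (induction n)
    case 0 then show ?case using c by simp
  next
    case (Suc n)
    have "(a \<otimes> b) [^] Suc n = z [^] tri n \<otimes> (a [^] n \<otimes> b [^] n) \<otimes> (a \<otimes> b)" using Suc by simp
    also have "\<dots> = z [^] tri n \<otimes> (a [^] n \<otimes> (b [^] n \<otimes> a) \<otimes> b)" using c by (simp add: m_assoc)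
    also have "\<dots> = z [^] tri n \<otimes> (a [^] n \<otimes> (z [^] n \<otimes> (a \<otimes> b [^] n)) \<otimes> b)" using sub by simp
    also have "a [^] n \<otimes> (z [^] n \<otimes> (a \<otimes> b [^] n)) = z [^] n \<otimes> (a [^] n \<otimes> (a \<otimes> b [^] n))"
      using c zc central_pow[of z "a [^] n" n] by (simp add: m_assoc[symmetric])
    also have "z [^] tri n \<otimes> (z [^] n \<otimes> (a [^] n \<otimes> (a \<otimes> b [^] n)) \<otimes> b)
       = (z [^] tri n \<otimes> z [^] n) \<otimes> ((a [^] n \<otimes> a) \<otimes> (b [^] n \<otimes> b))" using c by (simp add: m_assoc)
    also have "\<dots> = z [^] tri (Suc n) \<otimes> (a [^] Suc n \<otimes> b [^] Suc n)"
      using c by (simp add: nat_pow_mult tri_Suc)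
    finally show ?case .
  qed
qed

end


definition KS :: "('a, 'b) monoid_scheme \<Rightarrow> 'a set \<Rightarrow> ('a \<times> 'a) word set set" where
  "KS G N = {tn G n g | n g. n \<in> N \<and> g \<in> carrier G} \<union> {tn G g n | g n. g \<in> carrier G \<and> n \<in> N}"

definition KK :: "('a, 'b) monoid_scheme \<Rightarrow> 'a set \<Rightarrow> ('a \<times> 'a) word set set" where
  "KK G N = generate (tensor_square G) (KS G N)"

context tsq
begin

lemma normal_sub: "N \<lhd> G \<Longrightarrow> N \<subseteq> carrier G"
  by (simp add: normal_imp_subgroup subgroup.subset)

lemma KS_sub: "N \<subseteq> carrier G \<Longrightarrow> KS G N \<subseteq> carrier T"
  unfolding KS_def by auto

lemma KK_sub: "N \<subseteq> carrier G \<Longrightarrow> KK G N \<subseteq> carrier T"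
  unfolding KK_def by (rule T.generate_incl[OF KS_sub])

lemma comm_N: assumes "N \<lhd> G" "n \<in> N" "g \<in> carrier G"
  shows "comm G n g \<in> N" "comm G g n \<in> N"
proof -
  interpret N: normal N G by fact
  have n: "n \<in> carrier G" using assms normal_sub by blast
  have "g \<otimes> inv n \<otimes> inv g \<in> N" using assms by (intro N.inv_op_closed2) auto
  then have "n \<otimes> (g \<otimes> inv n \<otimes> inv g) \<in> N" using assms by (rule_tac N.m_closed) auto
  then show "comm G n g \<in> N" using n assms by (simp add: comm_def m_assoc)
  have "g \<otimes> n \<otimes> inv g \<in> N" using assms by (intro N.inv_op_closed2) auto
  then have "(g \<otimes> n \<otimes> inv g) \<otimes> inv n \<in> N" using assms by (rule_tac N.m_closed) auto
  then show "comm G g n \<in> N" using n assms by (simp add: comm_def m_assoc)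
qed

lemma kappa_KK: assumes "N \<lhd> G" "t \<in> KK G N" shows "kappa G t \<in> N"
proof -
  interpret N: normal N G by fact
  have sub: "N \<subseteq> carrier G" using assms normal_sub by blast
  from assms(2) show ?thesis unfolding KK_def
  proof (induction rule: generate.induct)
    case one then show ?case by (simp add: kappa_one)
  next
    case (incl h) then show ?case unfolding KS_def using comm_N[OF assms(1)] sub
      by (auto simp: kappa_tn)
  next
    case (inv h)
    then have "kappa G h \<in> N" unfolding KS_def using comm_N[OF assms(1)] sub
      by (auto simp: kappa_tn)
    moreover have "h \<in> carrier T" using inv KS_sub[OF sub] by blast
    ultimately show ?case by (simp add: kappa_inv)
  next
    case (eng a b)
    have "a \<in> carrier T" "b \<in> carrier T"
      using eng(1,2) T.generate_in_carrier[OF KS_sub[OF sub]] by auto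
    then show ?case using eng by (simp add: kappa_mult)
  qed
qed

lemma KK_normal: assumes "M \<lhd> G" shows "KK G M \<lhd> T"
  unfolding KK_def
proof (rule T.normal_generateI)
  interpret M: normal M G by fact
  have sub: "M \<subseteq> carrier G" using assms normal_sub by blast
  show "KS G M \<subseteq> carrier T" by (rule KS_sub[OF sub])
  fix h g assume h: "h \<in> KS G M" and g: "g \<in> carrier T"
  have hc: "h \<in> carrier T" using h KS_sub[OF sub] by blast
  have "g \<otimes>\<^bsub>T\<^esub> h \<otimes>\<^bsub>T\<^esub> inv\<^bsub>T\<^esub> g = act G (kappa G g) h" using F2 g hc by blast
  moreover have "act G (kappa G g) h \<in> KS G M"
  proof -
    define x where "x = kappa G g"
    have x: "x \<in> carrier G" using g by (simp add: x_def)
    have cm: "gconj G x m \<in> M" if "m \<in> M" for m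
      unfolding gconj_def using M.inv_op_closed2[OF x that] .
    from h consider (a) n g' where "h = tn G n g'" "n \<in> M" "g' \<in> carrier G"
      | (b) g' n where "h = tn G g' n" "g' \<in> carrier G" "n \<in> M"
      unfolding KS_def by blast
    then show ?thesis
    proof cases
      case a
      then have "act G x h = tn G (gconj G x n) (gconj G x g')" using x sub by (simp add: act_tn subsetD)
      moreover have "gconj G x n \<in> M" "gconj G x g' \<in> carrier G" using a cm x by auto
      ultimately show ?thesis unfolding KS_def x_def by blast
    next
      case b
      then have "act G x h = tn G (gconj G x g') (gconj G x n)" using x sub by (simp add: act_tn subsetD)
      moreover have "gconj G x n \<in> M" "gconj G x g' \<in> carrier G" using b cm x by auto
      ultimately show ?thesis unfolding KS_def x_def by blast
    qed
  qed
  ultimately show "g \<otimes>\<^bsub>T\<^esub> h \<otimes>\<^bsub>T\<^esub> inv\<^bsub>T\<^esub> g \<in> KS G M" by simp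
qed

end


locale tstep = tsq +
  fixes N M :: "'a set" and e :: nat
  assumes N_normal: "N \<lhd> G" and M_normal: "M \<lhd> G"
    and comm_NM: "\<And>x y. x \<in> N \<Longrightarrow> y \<in> N \<Longrightarrow> comm G x y \<in> M"
    and exp_e: "\<And>x. x \<in> carrier G \<Longrightarrow> x [^] e = \<one>"
begin

abbreviation L where "L \<equiv> KK G M"
definition Q where "Q = T Mod L"

definition pi where "pi t = L #>\<^bsub>T\<^esub> t"

lemma L_normal: "L \<lhd> T" by (rule KK_normal[OF M_normal])

sublocale Q: group Q unfolding Q_def by (rule normal.factorgroup_is_group[OF L_normal])

lemma N_sub: "N \<subseteq> carrier G" by (rule normal_sub[OF N_normal])
lemma M_sub: "M \<subseteq> carrier G" by (rule normal_sub[OF M_normal])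
lemma N_mem[simp]: "x \<in> N \<Longrightarrow> x \<in> carrier G" using N_sub by blast
lemma M_mem[simp]: "x \<in> M \<Longrightarrow> x \<in> carrier G" using M_sub by blast

lemma N_sg: "subgroup N G" by (rule normal_imp_subgroup[OF N_normal])

lemma N_m[simp]: "x \<in> N \<Longrightarrow> y \<in> N \<Longrightarrow> x \<otimes> y \<in> N" by (rule subgroup.m_closed[OF N_sg])
lemma N_pow[simp]: "x \<in> N \<Longrightarrow> x [^] (k::nat) \<in> N"
  by (induction k) (simp_all add: subgroup.one_closed[OF N_sg])

lemma pi_hom: "pi \<in> hom T Q"
  unfolding pi_def Q_def using normal.r_coset_hom_Mod[OF L_normal] by simp

lemma pi_carrier[simp]: "t \<in> carrier T \<Longrightarrow> pi t \<in> carrier Q"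
  by (rule hom_in_carrier[OF pi_hom])

lemma pi_mult: "a \<in> carrier T \<Longrightarrow> b \<in> carrier T \<Longrightarrow> pi (a \<otimes>\<^bsub>T\<^esub> b) = pi a \<otimes>\<^bsub>Q\<^esub> pi b"
  by (rule hom_mult[OF pi_hom])

lemma pi_inv: "a \<in> carrier T \<Longrightarrow> pi (inv\<^bsub>T\<^esub> a) = inv\<^bsub>Q\<^esub> pi a"
  by (rule hom_inv_gen[OF pi_hom _ T.group_axioms Q.group_axioms])

lemma pi_one[simp]: "pi \<one>\<^bsub>T\<^esub> = \<one>\<^bsub>Q\<^esub>"
  by (rule hom_one[OF pi_hom T.group_axioms Q.group_axioms])

lemma pi_pow: "a \<in> carrier T \<Longrightarrow> pi (a [^]\<^bsub>T\<^esub> (n::nat)) = pi a [^]\<^bsub>Q\<^esub> n"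
  by (rule hom_nat_pow[OF pi_hom _ T.group_axioms Q.group_axioms])

lemma L_sg: "subgroup L T" by (rule normal_imp_subgroup[OF L_normal])

lemma pi_eq_one: "t \<in> carrier T \<Longrightarrow> pi t = \<one>\<^bsub>Q\<^esub> \<longleftrightarrow> t \<in> L"
  unfolding pi_def Q_def using T.coset_join1[OF _ _ L_sg] T.coset_join2[OF _ L_sg] by auto

lemma Q_elem: "q \<in> carrier Q \<Longrightarrow> \<exists>t\<in>carrier T. q = pi t"
  unfolding pi_def Q_def carrier_FactGroup by blast

lemma pi_M1: "m \<in> M \<Longrightarrow> g \<in> carrier G \<Longrightarrow> pi (tn G m g) = \<one>\<^bsub>Q\<^esub>"
  by (subst pi_eq_one) (auto simp: KK_def KS_def intro!: generate.incl)

lemma pi_M2: "m \<in> M \<Longrightarrow> g \<in> carrier G \<Longrightarrow> pi (tn G g m) = \<one>\<^bsub>Q\<^esub>"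
  by (subst pi_eq_one) (auto simp: KK_def KS_def intro!: generate.incl)

lemma F3: assumes "m \<in> M" "s \<in> carrier T" shows "pi (act G m s) = pi s"
proof -
  have h: "(\<lambda>s. pi (act G m s)) \<in> hom T Q"
    using assms by (intro homI) (simp_all add: act_mult pi_mult)
  have gen: "pi (act G m (tn G a b)) = pi (tn G a b)" if "a \<in> carrier G" "b \<in> carrier G" for a b
    using assms that by (simp add: GF pi_mult pi_inv pi_M1)
  show ?thesis
    using T_hom_eqI[of Q "\<lambda>s. pi (act G m s)" pi, OF Q.group_axioms h pi_hom _ assms(2)] gen by simp
qed

lemma central_pi: assumes "t \<in> carrier T" "kappa G t \<in> M" "q \<in> carrier Q"
  shows "pi t \<otimes>\<^bsub>Q\<^esub> q = q \<otimes>\<^bsub>Q\<^esub> pi t"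
proof -
  obtain s where s: "s \<in> carrier T" "q = pi s" using Q_elem[OF assms(3)] by blast
  have "pi (t \<otimes>\<^bsub>T\<^esub> s \<otimes>\<^bsub>T\<^esub> inv\<^bsub>T\<^esub> t) = pi s" using F2 F3 assms s by simp
  then have "pi t \<otimes>\<^bsub>Q\<^esub> pi s \<otimes>\<^bsub>Q\<^esub> inv\<^bsub>Q\<^esub> pi t = pi s" using assms s by (simp add: pi_mult pi_inv)
  then show ?thesis using assms s by (simp add: Q.inv_solve_right')
qed

abbreviation c where "c x y \<equiv> pi (tn G x y)"

lemma c_carrier[simp]: "x \<in> carrier G \<Longrightarrow> y \<in> carrier G \<Longrightarrow> c x y \<in> carrier Q"
  by simp

lemma c_central: "x \<in> N \<Longrightarrow> y \<in> N \<Longrightarrow> q \<in> carrier Q \<Longrightarrow> c x y \<otimes>\<^bsub>Q\<^esub> q = q \<otimes>\<^bsub>Q\<^esub> c x y"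
  by (rule central_pi) (simp_all add: kappa_tn comm_NM)

lemma c_M: "x \<in> carrier G \<Longrightarrow> m \<in> M \<Longrightarrow> c x m = \<one>\<^bsub>Q\<^esub>"
  by (rule pi_M2)

lemma AI: assumes "x \<in> N" "y \<in> N" "y' \<in> N"
  shows "pi (act G y (tn G x y')) = c x y'"
proof -
  have "gconj G x y' = comm G x y' \<otimes> y'" using assms by (simp add: gconj_def comm_def m_assoc)
  then have "act G y (tn G x y') = tn G y (comm G x y') \<otimes>\<^bsub>T\<^esub> act G (comm G x y') (tn G y y')
      \<otimes>\<^bsub>T\<^esub> tn G x y' \<otimes>\<^bsub>T\<^esub> inv\<^bsub>T\<^esub> tn G y y'"
    using assms by (simp add: GF R2')
  then have "pi (act G y (tn G x y')) = c y y' \<otimes>\<^bsub>Q\<^esub> c x y' \<otimes>\<^bsub>Q\<^esub> inv\<^bsub>Q\<^esub> c y y'"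
    using assms by (simp add: pi_mult pi_inv c_M comm_NM F3)
  also have "\<dots> = c x y'" using assms c_central[of y y' "c x y'"] by (simp add: Q.m_assoc)
  finally show ?thesis .
qed

lemma cR: assumes "x \<in> N" "y \<in> N" "y' \<in> N" shows "c x (y \<otimes> y') = c x y \<otimes>\<^bsub>Q\<^esub> c x y'"
  using assms by (simp add: R2' pi_mult AI)

lemma cL: assumes "x \<in> N" "x' \<in> N" "y \<in> N" shows "c (x \<otimes> x') y = c x' y \<otimes>\<^bsub>Q\<^esub> c x y"
  using assms by (simp add: R1' pi_mult AI)

lemma c_pow_right: assumes "x \<in> N" "y \<in> N" shows "c x (y [^] (k::nat)) = c x y [^]\<^bsub>Q\<^esub> k"
proof (induction k)
  case 0 then show ?case using assms by simp
next
  case (Suc k) then show ?case using assms by (simp add: cR)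
qed

lemma c_pow_left: assumes "x \<in> N" "y \<in> N" shows "c (x [^] (k::nat)) y = c x y [^]\<^bsub>Q\<^esub> k"
proof (induction k)
  case 0 then show ?case using assms by simp
next
  case (Suc k) then show ?case using assms by (simp add: cL Q.pow_comm1)
qed

lemma c_e: assumes "x \<in> N" "y \<in> N" shows "c x y [^]\<^bsub>Q\<^esub> e = \<one>\<^bsub>Q\<^esub>"
  using c_pow_right[OF assms, of e] assms exp_e[of y] by (simp add: pi_one)

definition Zk :: "nat \<Rightarrow> _" where
  "Zk k = {z \<in> carrier Q. (\<forall>q\<in>carrier Q. z \<otimes>\<^bsub>Q\<^esub> q = q \<otimes>\<^bsub>Q\<^esub> z) \<and> z [^]\<^bsub>Q\<^esub> k = \<one>\<^bsub>Q\<^esub>}"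

lemma Zk_one: "\<one>\<^bsub>Q\<^esub> \<in> Zk k" by (simp add: Zk_def)

lemma Zk_mult: assumes "z \<in> Zk k" "w \<in> Zk k" shows "z \<otimes>\<^bsub>Q\<^esub> w \<in> Zk k"
proof -
  have c: "z \<in> carrier Q" "w \<in> carrier Q" using assms by (auto simp: Zk_def)
  have cz: "\<And>q. q \<in> carrier Q \<Longrightarrow> z \<otimes>\<^bsub>Q\<^esub> q = q \<otimes>\<^bsub>Q\<^esub> z"
   and cw: "\<And>q. q \<in> carrier Q \<Longrightarrow> w \<otimes>\<^bsub>Q\<^esub> q = q \<otimes>\<^bsub>Q\<^esub> w" using assms by (auto simp: Zk_def)
  have "\<forall>q\<in>carrier Q. z \<otimes>\<^bsub>Q\<^esub> w \<otimes>\<^bsub>Q\<^esub> q = q \<otimes>\<^bsub>Q\<^esub> (z \<otimes>\<^bsub>Q\<^esub> w)"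
  proof
    fix q assume q: "q \<in> carrier Q"
    have "z \<otimes>\<^bsub>Q\<^esub> w \<otimes>\<^bsub>Q\<^esub> q = z \<otimes>\<^bsub>Q\<^esub> (q \<otimes>\<^bsub>Q\<^esub> w)" using c q cw[OF q] by (simp add: Q.m_assoc)
    also have "\<dots> = (z \<otimes>\<^bsub>Q\<^esub> q) \<otimes>\<^bsub>Q\<^esub> w" using c q by (simp add: Q.m_assoc)
    also have "\<dots> = q \<otimes>\<^bsub>Q\<^esub> (z \<otimes>\<^bsub>Q\<^esub> w)" using c q cz[OF q] by (simp add: Q.m_assoc)
    finally show "z \<otimes>\<^bsub>Q\<^esub> w \<otimes>\<^bsub>Q\<^esub> q = q \<otimes>\<^bsub>Q\<^esub> (z \<otimes>\<^bsub>Q\<^esub> w)" .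
  qed
  moreover have "(z \<otimes>\<^bsub>Q\<^esub> w) [^]\<^bsub>Q\<^esub> k = \<one>\<^bsub>Q\<^esub>"
  proof -
    have "z [^]\<^bsub>Q\<^esub> k = \<one>\<^bsub>Q\<^esub>" "w [^]\<^bsub>Q\<^esub> k = \<one>\<^bsub>Q\<^esub>" using assms unfolding Zk_def by blast+
    then show ?thesis using c cz[OF c(2)] by (simp add: Q.pow_mult_distrib)
  qed
  ultimately show ?thesis using c unfolding Zk_def by blast
qed

lemma Zk_inv: assumes "z \<in> Zk k" shows "inv\<^bsub>Q\<^esub> z \<in> Zk k"
proof -
  have c: "z \<in> carrier Q" and cz: "\<And>q. q \<in> carrier Q \<Longrightarrow> z \<otimes>\<^bsub>Q\<^esub> q = q \<otimes>\<^bsub>Q\<^esub> z"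
    and p: "z [^]\<^bsub>Q\<^esub> k = \<one>\<^bsub>Q\<^esub>" using assms by (auto simp: Zk_def)
  have "\<forall>q\<in>carrier Q. inv\<^bsub>Q\<^esub> z \<otimes>\<^bsub>Q\<^esub> q = q \<otimes>\<^bsub>Q\<^esub> inv\<^bsub>Q\<^esub> z"
  proof
    fix q assume q: "q \<in> carrier Q"
    have h1: "z \<otimes>\<^bsub>Q\<^esub> (q \<otimes>\<^bsub>Q\<^esub> inv\<^bsub>Q\<^esub> z) = q"
      using c q cz[of "q \<otimes>\<^bsub>Q\<^esub> inv\<^bsub>Q\<^esub> z"] by (simp add: Q.m_assoc)
    have "inv\<^bsub>Q\<^esub> z \<otimes>\<^bsub>Q\<^esub> q = inv\<^bsub>Q\<^esub> z \<otimes>\<^bsub>Q\<^esub> (z \<otimes>\<^bsub>Q\<^esub> (q \<otimes>\<^bsub>Q\<^esub> inv\<^bsub>Q\<^esub> z))"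
      using h1 by simp
    also have "\<dots> = q \<otimes>\<^bsub>Q\<^esub> inv\<^bsub>Q\<^esub> z" using c q by simp
    finally show "inv\<^bsub>Q\<^esub> z \<otimes>\<^bsub>Q\<^esub> q = q \<otimes>\<^bsub>Q\<^esub> inv\<^bsub>Q\<^esub> z" .
  qed
  moreover have "inv\<^bsub>Q\<^esub> z [^]\<^bsub>Q\<^esub> k = \<one>\<^bsub>Q\<^esub>" using c p by (simp add: Q.nat_pow_inv)
  ultimately show ?thesis using c unfolding Zk_def by blast
qed

lemma Zk_carrier: "z \<in> Zk k \<Longrightarrow> z \<in> carrier Q" unfolding Zk_def by blast
lemma Zk_central: "z \<in> Zk k \<Longrightarrow> q \<in> carrier Q \<Longrightarrow> z \<otimes>\<^bsub>Q\<^esub> q = q \<otimes>\<^bsub>Q\<^esub> z" unfolding Zk_def by blast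
lemma Zk_pow: "z \<in> Zk k \<Longrightarrow> z [^]\<^bsub>Q\<^esub> k = \<one>\<^bsub>Q\<^esub>" unfolding Zk_def by blast

lemma c_Zk_e: assumes "x \<in> N" "y \<in> N" shows "c x y \<in> Zk e"
proof -
  have "\<forall>q\<in>carrier Q. c x y \<otimes>\<^bsub>Q\<^esub> q = q \<otimes>\<^bsub>Q\<^esub> c x y" using c_central assms by blast
  then show ?thesis using c_e[OF assms] assms unfolding Zk_def by simp
qed

lemma act_nG: assumes "x \<in> carrier G" "n \<in> carrier G" "g \<in> carrier G"
  shows "pi (act G x (tn G n g)) = c x (comm G n g) \<otimes>\<^bsub>Q\<^esub> pi (tn G n g)"
  using assms by (simp add: XI pi_mult)

lemma act_gN: assumes "x \<in> N" "n \<in> N" "g \<in> carrier G"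
  shows "pi (act G x (tn G g n)) = c x (comm G g n) \<otimes>\<^bsub>Q\<^esub> pi (tn G g n)"
proof -
  have cgn: "comm G g n \<in> N" using comm_N[OF N_normal] assms by blast
  have gn: "gconj G g n = comm G g n \<otimes> n" using assms by (simp add: gconj_def comm_def m_assoc)
  have "pi (act G x (tn G g n)) = c x (comm G g n) \<otimes>\<^bsub>Q\<^esub> c x n \<otimes>\<^bsub>Q\<^esub> pi (tn G g n) \<otimes>\<^bsub>Q\<^esub> inv\<^bsub>Q\<^esub> c x n"
    using assms cgn by (simp add: GF pi_mult pi_inv gn cR)
  also have "\<dots> = c x (comm G g n) \<otimes>\<^bsub>Q\<^esub> pi (tn G g n)"
    using assms cgn c_central[of x n "pi (tn G g n)"] by (simp add: Q.m_assoc)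
  finally show ?thesis .
qed

end


context tstep
begin

lemma KS_N_carrier: "h \<in> KS G N \<Longrightarrow> h \<in> carrier T"
  using KS_sub[OF N_sub] by blast

lemma KK_N_carrier: "h \<in> KK G N \<Longrightarrow> h \<in> carrier T"
  using KK_sub[OF N_sub] by blast

lemma Zk_pow_central: assumes "z \<in> Zk k" "q \<in> carrier Q"
  shows "z [^]\<^bsub>Q\<^esub> (j::nat) \<otimes>\<^bsub>Q\<^esub> q = q \<otimes>\<^bsub>Q\<^esub> z [^]\<^bsub>Q\<^esub> j"
proof -
  have "\<And>q. q \<in> carrier Q \<Longrightarrow> z \<otimes>\<^bsub>Q\<^esub> q = q \<otimes>\<^bsub>Q\<^esub> z" using Zk_central[OF assms(1)] .
  then show ?thesis by (rule Q.central_pow[OF Zk_carrier[OF assms(1)] _ assms(2)])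
qed

lemma Zk_pow_dvd: assumes "z \<in> Zk k" "k dvd r" shows "z [^]\<^bsub>Q\<^esub> r = \<one>\<^bsub>Q\<^esub>"
proof -
  obtain u where "r = k * u" using assms(2) by blast
  then show ?thesis using assms(1) Zk_carrier[OF assms(1)] Zk_pow[OF assms(1)] by (simp add: Q.nat_pow_pow[symmetric])
qed

context
  fixes k :: nat
  assumes hk: "\<And>x n g. x \<in> N \<Longrightarrow> n \<in> N \<Longrightarrow> g \<in> carrier G \<Longrightarrow>
      c x (comm G n g) \<in> Zk k \<and> c x (comm G g n) \<in> Zk k"
begin

lemma gen_DZ: assumes "x \<in> N" "h \<in> KS G N"
  shows "\<exists>z\<in>Zk k. pi (act G x h) = z \<otimes>\<^bsub>Q\<^esub> pi h"
proof -
  from assms(2) consider (a) n g where "h = tn G n g" "n \<in> N" "g \<in> carrier G"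
    | (b) g n where "h = tn G g n" "g \<in> carrier G" "n \<in> N"
    unfolding KS_def by blast
  then show ?thesis
  proof cases
    case a then show ?thesis using assms hk act_nG by auto
  next
    case b then show ?thesis using assms hk act_gN by auto
  qed
qed

lemma DZ: assumes "x \<in> N" "s \<in> KK G N"
  shows "\<exists>z\<in>Zk k. pi (act G x s) = z \<otimes>\<^bsub>Q\<^esub> pi s"
  using assms(2) unfolding KK_def
proof (induction rule: generate.induct)
  case one then show ?case using assms Zk_one by (intro bexI[of _ "\<one>\<^bsub>Q\<^esub>"]) simp_all
next
  case (incl h) then show ?case using gen_DZ assms(1) by blast
next
  case (inv h)
  obtain z where z: "z \<in> Zk k" "pi (act G x h) = z \<otimes>\<^bsub>Q\<^esub> pi h" using gen_DZ assms(1) inv by blast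
  have hc: "h \<in> carrier T" using inv KS_N_carrier by blast
  have zc: "z \<in> carrier Q" using z Zk_carrier by blast
  have "pi (act G x (inv\<^bsub>T\<^esub> h)) = inv\<^bsub>Q\<^esub> (z \<otimes>\<^bsub>Q\<^esub> pi h)"
    using hc assms z by (simp add: act_inv pi_inv)
  also have "\<dots> = inv\<^bsub>Q\<^esub> pi h \<otimes>\<^bsub>Q\<^esub> inv\<^bsub>Q\<^esub> z" using hc zc by (simp add: Q.inv_mult_group)
  also have "\<dots> = inv\<^bsub>Q\<^esub> z \<otimes>\<^bsub>Q\<^esub> inv\<^bsub>Q\<^esub> pi h"
    using Zk_central[OF Zk_inv[OF z(1)], of "inv\<^bsub>Q\<^esub> pi h"] hc by simp
  finally show ?case using Zk_inv[OF z(1)] hc by (auto simp: pi_inv)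
next
  case (eng h1 h2)
  have hc: "h1 \<in> carrier T" "h2 \<in> carrier T" using eng(1,2) KK_N_carrier unfolding KK_def by auto
  obtain z1 where z1: "z1 \<in> Zk k" "pi (act G x h1) = z1 \<otimes>\<^bsub>Q\<^esub> pi h1" using eng by blast
  obtain z2 where z2: "z2 \<in> Zk k" "pi (act G x h2) = z2 \<otimes>\<^bsub>Q\<^esub> pi h2" using eng by blast
  have zc: "z1 \<in> carrier Q" "z2 \<in> carrier Q" using z1 z2 Zk_carrier by auto
  have "pi (act G x (h1 \<otimes>\<^bsub>T\<^esub> h2)) = z1 \<otimes>\<^bsub>Q\<^esub> (pi h1 \<otimes>\<^bsub>Q\<^esub> z2) \<otimes>\<^bsub>Q\<^esub> pi h2"
    using hc assms z1 z2 zc by (simp add: act_mult pi_mult Q.m_assoc)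
  also have "pi h1 \<otimes>\<^bsub>Q\<^esub> z2 = z2 \<otimes>\<^bsub>Q\<^esub> pi h1" using Zk_central[OF z2(1), of "pi h1"] hc by simp
  finally have "pi (act G x (h1 \<otimes>\<^bsub>T\<^esub> h2)) = (z1 \<otimes>\<^bsub>Q\<^esub> z2) \<otimes>\<^bsub>Q\<^esub> pi (h1 \<otimes>\<^bsub>T\<^esub> h2)"
    using hc zc by (simp add: pi_mult Q.m_assoc)
  then show ?case using Zk_mult[OF z1(1) z2(1)] by blast
qed

lemma Q3: assumes "a \<in> KK G N" "b \<in> KK G N"
  shows "\<exists>z\<in>Zk k. pi b \<otimes>\<^bsub>Q\<^esub> pi a = z \<otimes>\<^bsub>Q\<^esub> (pi a \<otimes>\<^bsub>Q\<^esub> pi b)"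
proof -
  have ac: "a \<in> carrier T" "b \<in> carrier T" using assms KK_N_carrier by auto
  have kb: "kappa G b \<in> N" by (rule kappa_KK[OF N_normal assms(2)])
  obtain z where z: "z \<in> Zk k" "pi (act G (kappa G b) a) = z \<otimes>\<^bsub>Q\<^esub> pi a"
    using DZ[OF kb assms(1)] by blast
  have zc: "z \<in> carrier Q" using z Zk_carrier by blast
  have "pi (b \<otimes>\<^bsub>T\<^esub> a \<otimes>\<^bsub>T\<^esub> inv\<^bsub>T\<^esub> b) = z \<otimes>\<^bsub>Q\<^esub> pi a"
    using F2[OF ac(2,1)] z(2) by simp
  then have "pi b \<otimes>\<^bsub>Q\<^esub> pi a \<otimes>\<^bsub>Q\<^esub> inv\<^bsub>Q\<^esub> pi b = z \<otimes>\<^bsub>Q\<^esub> pi a"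
    using ac by (simp add: pi_mult pi_inv)
  then have "pi b \<otimes>\<^bsub>Q\<^esub> pi a = z \<otimes>\<^bsub>Q\<^esub> pi a \<otimes>\<^bsub>Q\<^esub> pi b"
    using ac zc by (simp add: Q.inv_solve_right')
  then show ?thesis using z ac zc by (auto simp: Q.m_assoc)
qed

lemma final_pow: assumes "z \<in> Zk k" "P \<in> carrier Q" "z [^]\<^bsub>Q\<^esub> tri e \<otimes>\<^bsub>Q\<^esub> P [^]\<^bsub>Q\<^esub> e = \<one>\<^bsub>Q\<^esub>"
  "k dvd tri e * m"
  shows "P [^]\<^bsub>Q\<^esub> (e * m) = \<one>\<^bsub>Q\<^esub>"
proof -
  have zc: "z \<in> carrier Q" using assms Zk_carrier by blast
  have "inv\<^bsub>Q\<^esub> (P [^]\<^bsub>Q\<^esub> e) = z [^]\<^bsub>Q\<^esub> tri e"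
    by (rule Q.inv_equality[OF assms(3)]) (use assms zc in simp_all)
  then have "inv\<^bsub>Q\<^esub> (inv\<^bsub>Q\<^esub> (P [^]\<^bsub>Q\<^esub> e)) = inv\<^bsub>Q\<^esub> (z [^]\<^bsub>Q\<^esub> tri e)" by simp
  then have "P [^]\<^bsub>Q\<^esub> e = inv\<^bsub>Q\<^esub> (z [^]\<^bsub>Q\<^esub> tri e)" using assms by simp
  then have "P [^]\<^bsub>Q\<^esub> (e * m) = inv\<^bsub>Q\<^esub> (z [^]\<^bsub>Q\<^esub> (tri e * m))"
    using assms zc by (simp add: Q.nat_pow_pow[symmetric] Q.nat_pow_inv)
  also have "z [^]\<^bsub>Q\<^esub> (tri e * m) = \<one>\<^bsub>Q\<^esub>" by (rule Zk_pow_dvd[OF assms(1,4)])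
  finally show ?thesis by simp
qed

lemma gen1: assumes "n \<in> N" "g \<in> carrier G" "k dvd tri e * m"
  shows "pi (tn G n g) [^]\<^bsub>Q\<^esub> (e * m) = \<one>\<^bsub>Q\<^esub>"
proof -
  define z where "z = c n (comm G n g)"
  define P where "P = pi (tn G n g)"
  have cng: "comm G n g \<in> N" using comm_N[OF N_normal] assms by blast
  have z: "z \<in> Zk k" using hk assms by (simp add: z_def)
  have zc: "z \<in> carrier Q" using z Zk_carrier by blast
  have Pc: "P \<in> carrier Q" using assms by (simp add: P_def)
  have cf: "pi (tn G (n [^] j) g) = z [^]\<^bsub>Q\<^esub> tri j \<otimes>\<^bsub>Q\<^esub> P [^]\<^bsub>Q\<^esub> j" for j :: nat
  proof (induction j)
    case 0 then show ?case using assms by simp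
  next
    case (Suc j)
    have "pi (tn G (n [^] Suc j) g) = pi (act G (n [^] j) (tn G n g)) \<otimes>\<^bsub>Q\<^esub> pi (tn G (n [^] j) g)"
      using assms by (simp add: R1' pi_mult)
    also have "\<dots> = (z [^]\<^bsub>Q\<^esub> j \<otimes>\<^bsub>Q\<^esub> P) \<otimes>\<^bsub>Q\<^esub> (z [^]\<^bsub>Q\<^esub> tri j \<otimes>\<^bsub>Q\<^esub> P [^]\<^bsub>Q\<^esub> j)"
      using assms cng Suc by (simp add: act_nG c_pow_left z_def P_def)
    also have "\<dots> = z [^]\<^bsub>Q\<^esub> j \<otimes>\<^bsub>Q\<^esub> (P \<otimes>\<^bsub>Q\<^esub> z [^]\<^bsub>Q\<^esub> tri j) \<otimes>\<^bsub>Q\<^esub> P [^]\<^bsub>Q\<^esub> j"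
      using zc Pc by (simp add: Q.m_assoc)
    also have "P \<otimes>\<^bsub>Q\<^esub> z [^]\<^bsub>Q\<^esub> tri j = z [^]\<^bsub>Q\<^esub> tri j \<otimes>\<^bsub>Q\<^esub> P"
      using Zk_pow_central[OF z Pc] by simp
    also have "z [^]\<^bsub>Q\<^esub> j \<otimes>\<^bsub>Q\<^esub> (z [^]\<^bsub>Q\<^esub> tri j \<otimes>\<^bsub>Q\<^esub> P) \<otimes>\<^bsub>Q\<^esub> P [^]\<^bsub>Q\<^esub> j
        = (z [^]\<^bsub>Q\<^esub> j \<otimes>\<^bsub>Q\<^esub> z [^]\<^bsub>Q\<^esub> tri j) \<otimes>\<^bsub>Q\<^esub> (P \<otimes>\<^bsub>Q\<^esub> P [^]\<^bsub>Q\<^esub> j)"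
      using zc Pc by (simp add: Q.m_assoc)
    also have "\<dots> = z [^]\<^bsub>Q\<^esub> tri (Suc j) \<otimes>\<^bsub>Q\<^esub> P [^]\<^bsub>Q\<^esub> Suc j"
      using zc Pc by (simp add: Q.nat_pow_mult tri_Suc add.commute Q.pow_comm1)
    finally show ?case .
  qed
  have "z [^]\<^bsub>Q\<^esub> tri e \<otimes>\<^bsub>Q\<^esub> P [^]\<^bsub>Q\<^esub> e = \<one>\<^bsub>Q\<^esub>"
    using cf[of e] assms exp_e[of n] by simp
  then show ?thesis using final_pow[OF z Pc _ assms(3)] by (simp add: P_def)
qed

lemma gen2: assumes "n \<in> N" "g \<in> carrier G" "k dvd tri e * m"
  shows "pi (tn G g n) [^]\<^bsub>Q\<^esub> (e * m) = \<one>\<^bsub>Q\<^esub>"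
proof -
  define z where "z = c n (comm G g n)"
  define P where "P = pi (tn G g n)"
  have cgn: "comm G g n \<in> N" using comm_N[OF N_normal] assms by blast
  have z: "z \<in> Zk k" using hk assms by (simp add: z_def)
  have zc: "z \<in> carrier Q" using z Zk_carrier by blast
  have Pc: "P \<in> carrier Q" using assms by (simp add: P_def)
  have cf: "pi (tn G g (n [^] j)) = z [^]\<^bsub>Q\<^esub> tri j \<otimes>\<^bsub>Q\<^esub> P [^]\<^bsub>Q\<^esub> j" for j :: nat
  proof (induction j)
    case 0 then show ?case using assms by simp
  next
    case (Suc j)
    have "pi (tn G g (n [^] Suc j)) = pi (tn G g (n [^] j)) \<otimes>\<^bsub>Q\<^esub> pi (act G (n [^] j) (tn G g n))"
      using assms by (simp add: R2' pi_mult)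
    also have "\<dots> = (z [^]\<^bsub>Q\<^esub> tri j \<otimes>\<^bsub>Q\<^esub> P [^]\<^bsub>Q\<^esub> j) \<otimes>\<^bsub>Q\<^esub> (z [^]\<^bsub>Q\<^esub> j \<otimes>\<^bsub>Q\<^esub> P)"
      using assms cgn Suc by (simp add: act_gN c_pow_left z_def P_def)
    also have "\<dots> = z [^]\<^bsub>Q\<^esub> tri j \<otimes>\<^bsub>Q\<^esub> (P [^]\<^bsub>Q\<^esub> j \<otimes>\<^bsub>Q\<^esub> z [^]\<^bsub>Q\<^esub> j) \<otimes>\<^bsub>Q\<^esub> P"
      using zc Pc by (simp add: Q.m_assoc)
    also have "P [^]\<^bsub>Q\<^esub> j \<otimes>\<^bsub>Q\<^esub> z [^]\<^bsub>Q\<^esub> j = z [^]\<^bsub>Q\<^esub> j \<otimes>\<^bsub>Q\<^esub> P [^]\<^bsub>Q\<^esub> j"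
      using Zk_pow_central[OF z, of "P [^]\<^bsub>Q\<^esub> j" j] Pc by simp
    also have "z [^]\<^bsub>Q\<^esub> tri j \<otimes>\<^bsub>Q\<^esub> (z [^]\<^bsub>Q\<^esub> j \<otimes>\<^bsub>Q\<^esub> P [^]\<^bsub>Q\<^esub> j) \<otimes>\<^bsub>Q\<^esub> P
        = (z [^]\<^bsub>Q\<^esub> tri j \<otimes>\<^bsub>Q\<^esub> z [^]\<^bsub>Q\<^esub> j) \<otimes>\<^bsub>Q\<^esub> (P [^]\<^bsub>Q\<^esub> j \<otimes>\<^bsub>Q\<^esub> P)"
      using zc Pc by (simp add: Q.m_assoc)
    also have "\<dots> = z [^]\<^bsub>Q\<^esub> tri (Suc j) \<otimes>\<^bsub>Q\<^esub> P [^]\<^bsub>Q\<^esub> Suc j"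
      using zc Pc by (simp add: Q.nat_pow_mult tri_Suc)
    finally show ?case .
  qed
  have "z [^]\<^bsub>Q\<^esub> tri e \<otimes>\<^bsub>Q\<^esub> P [^]\<^bsub>Q\<^esub> e = \<one>\<^bsub>Q\<^esub>"
    using cf[of e] assms exp_e[of n] by simp
  then show ?thesis using final_pow[OF z Pc _ assms(3)] by (simp add: P_def)
qed

lemma main_pi: assumes "k dvd tri e * m" "k dvd tri (e * m)" "s \<in> KK G N"
  shows "pi s [^]\<^bsub>Q\<^esub> (e * m) = \<one>\<^bsub>Q\<^esub>"
  using assms(3) unfolding KK_def
proof (induction rule: generate.induct)
  case one then show ?case by simp
next
  case (incl h)
  then consider (a) n g where "h = tn G n g" "n \<in> N" "g \<in> carrier G"
    | (b) g n where "h = tn G g n" "g \<in> carrier G" "n \<in> N"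
    unfolding KS_def by blast
  then show ?case
  proof cases
    case a then show ?thesis using gen1 assms by simp
  next
    case b then show ?thesis using gen2 assms by simp
  qed
next
  case (inv h)
  have hc: "h \<in> carrier T" using inv KS_N_carrier by blast
  have "pi h [^]\<^bsub>Q\<^esub> (e * m) = \<one>\<^bsub>Q\<^esub>"
  proof -
    from inv consider (a) n g where "h = tn G n g" "n \<in> N" "g \<in> carrier G"
      | (b) g n where "h = tn G g n" "g \<in> carrier G" "n \<in> N"
      unfolding KS_def by blast
    then show ?thesis
    proof cases
      case a then show ?thesis using gen1 assms by simp
    next
      case b then show ?thesis using gen2 assms by simp
    qed
  qed
  then show ?case using hc by (simp add: pi_inv Q.nat_pow_inv)
next
  case (eng h1 h2)
  have hc: "h1 \<in> carrier T" "h2 \<in> carrier T" using eng(1,2) KK_N_carrier unfolding KK_def by auto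
  obtain z where z: "z \<in> Zk k" "pi h2 \<otimes>\<^bsub>Q\<^esub> pi h1 = z \<otimes>\<^bsub>Q\<^esub> (pi h1 \<otimes>\<^bsub>Q\<^esub> pi h2)"
    using Q3 eng(1,2) unfolding KK_def by blast
  have zc: "z \<in> carrier Q" using z Zk_carrier by blast
  have "(pi h1 \<otimes>\<^bsub>Q\<^esub> pi h2) [^]\<^bsub>Q\<^esub> (e * m)
      = z [^]\<^bsub>Q\<^esub> tri (e * m) \<otimes>\<^bsub>Q\<^esub> (pi h1 [^]\<^bsub>Q\<^esub> (e * m) \<otimes>\<^bsub>Q\<^esub> pi h2 [^]\<^bsub>Q\<^esub> (e * m))"
  proof -
    have zcent: "\<And>q. q \<in> carrier Q \<Longrightarrow> z \<otimes>\<^bsub>Q\<^esub> q = q \<otimes>\<^bsub>Q\<^esub> z" using Zk_central[OF z(1)] .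
    show ?thesis by (rule Q.pow_comm2[OF pi_carrier[OF hc(1)] pi_carrier[OF hc(2)] zc zcent z(2)])
  qed
  then show ?case using eng hc Zk_pow_dvd[OF z(1) assms(2)] by (simp add: pi_mult)
qed

lemma main_L: assumes "k dvd tri e * m" "k dvd tri (e * m)" "s \<in> KK G N"
  shows "s [^]\<^bsub>T\<^esub> (e * m) \<in> KK G M"
proof -
  have sc: "s \<in> carrier T" using assms KK_N_carrier by blast
  have "pi (s [^]\<^bsub>T\<^esub> (e * m)) = \<one>\<^bsub>Q\<^esub>" using main_pi[OF assms] sc by (simp add: pi_pow)
  then show ?thesis using sc pi_eq_one by simp
qed

end

end


lemma tri_odd: "odd e \<Longrightarrow> e dvd tri e"
proof -
  assume "odd e"
  then obtain r where "e - 1 = 2 * r" by (metis dvd_def odd_Suc_minus_one odd_even_add odd_one even_diff_nat)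
  then have "tri e = e * r" unfolding tri_def by simp
  then show ?thesis by simp
qed

lemma tri_times2: "e dvd tri e * 2"
proof -
  have "even (e * (e - 1))" by (cases e) auto
  then have "tri e * 2 = e * (e - 1)" unfolding tri_def by simp
  then show ?thesis by simp
qed

lemma tri_double: "e dvd tri (e * 2)"
proof -
  have "tri (e * 2) = e * (e * 2 - 1)" unfolding tri_def by simp
  then show ?thesis by simp
qed

lemma exponent_dvd:
  assumes "monoid H" "\<And>x. x \<in> carrier H \<Longrightarrow> x [^]\<^bsub>H\<^esub> B = \<one>\<^bsub>H\<^esub>"
  shows "group_exponent H dvd B"
proof (cases "B = 0")
  case True then show ?thesis by simp
next
  case False
  interpret H: monoid H by fact
  have ex: "\<exists>n::nat>0. \<forall>x\<in>carrier H. x [^]\<^bsub>H\<^esub> n = \<one>\<^bsub>H\<^esub>" using False assms(2) by blast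
  define m where "m = (LEAST n::nat. n > 0 \<and> (\<forall>x\<in>carrier H. x [^]\<^bsub>H\<^esub> n = \<one>\<^bsub>H\<^esub>))"
  have ge: "group_exponent H = m" using ex by (simp add: group_exponent_def m_def)
  have m: "m > 0" "\<forall>x\<in>carrier H. x [^]\<^bsub>H\<^esub> m = \<one>\<^bsub>H\<^esub>"
    using LeastI_ex[OF ex] unfolding m_def by auto
  have "\<forall>x\<in>carrier H. x [^]\<^bsub>H\<^esub> (B mod m) = \<one>\<^bsub>H\<^esub>"
  proof
    fix x assume x: "x \<in> carrier H"
    have "x [^]\<^bsub>H\<^esub> B = x [^]\<^bsub>H\<^esub> (m * (B div m)) \<otimes>\<^bsub>H\<^esub> x [^]\<^bsub>H\<^esub> (B mod m)"
      using x by (simp add: H.nat_pow_mult)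
    also have "x [^]\<^bsub>H\<^esub> (m * (B div m)) = \<one>\<^bsub>H\<^esub>"
      using x m by (simp add: H.nat_pow_pow[symmetric])
    finally show "x [^]\<^bsub>H\<^esub> (B mod m) = \<one>\<^bsub>H\<^esub>" using x assms(2) by simp
  qed
  moreover have "\<not> (B mod m > 0 \<and> (\<forall>x\<in>carrier H. x [^]\<^bsub>H\<^esub> (B mod m) = \<one>\<^bsub>H\<^esub>))"
  proof
    assume "B mod m > 0 \<and> (\<forall>x\<in>carrier H. x [^]\<^bsub>H\<^esub> (B mod m) = \<one>\<^bsub>H\<^esub>)"
    then have "m \<le> B mod m" unfolding m_def by (rule Least_le)
    moreover have "B mod m < m" using m by simp
    ultimately show False by simp
  qed
  ultimately have "B mod m = 0" by simp
  then show ?thesis using ge by (simp add: mod_eq_0_iff_dvd)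
qed

context tsq
begin

abbreviation D where "D i \<equiv> (derived G ^^ i) (carrier G)"

lemma D_normal: "D i \<lhd> G"
  by (induction i) (simp_all add: normal_self derived_is_normal)

lemma comm_D: "x \<in> D i \<Longrightarrow> y \<in> D i \<Longrightarrow> comm G x y \<in> D (Suc i)"
  by (simp add: derived_def comm_def) (rule generate.incl, blast)

lemma KK_top: "KK G (carrier G) = carrier T"
proof
  show "KK G (carrier G) \<subseteq> carrier T" by (rule KK_sub) simp
  show "carrier T \<subseteq> KK G (carrier G)"
  proof
    fix t assume "t \<in> carrier T"
    then show "t \<in> KK G (carrier G)" unfolding KK_def
    proof (induction rule: T_induct)
      case one then show ?case by (rule generate.one)
    next
      case (gen g h) then show ?case by (intro generate.incl) (auto simp: KS_def)
    next
      case (inv g h) then show ?case by (intro generate.inv) (auto simp: KS_def)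
    next
      case (mult a b) show ?case using mult(3,4) by (rule generate.eng)
    qed
  qed
qed

lemma KK_bot: "t \<in> KK G {\<one>} \<Longrightarrow> t = \<one>\<^bsub>T\<^esub>"
  unfolding KK_def
proof (induction rule: generate.induct)
  case one then show ?case by simp
next
  case (incl h) then show ?case by (auto simp: KS_def)
next
  case (inv h) then show ?case by (auto simp: KS_def)
next
  case (eng a b) then show ?case by simp
qed

lemma step_export:
  assumes "N \<lhd> G" "M \<lhd> G" "\<And>x y. x \<in> N \<Longrightarrow> y \<in> N \<Longrightarrow> comm G x y \<in> M"
    and "\<And>x. x \<in> carrier G \<Longrightarrow> x [^] e = \<one>"
    and k: "k = e \<or> (k = 1 \<and> (\<forall>n\<in>N. \<forall>g\<in>carrier G. comm G n g \<in> M \<and> comm G g n \<in> M))"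
    and "k dvd tri e * m" "k dvd tri (e * m)" "s \<in> KK G N"
  shows "s [^]\<^bsub>T\<^esub> (e * m) \<in> KK G M"
proof -
  have "tstep G N M e"
    by (rule tstep.intro) (simp_all add: tsq_def group_axioms tstep_axioms_def assms(1-4))
  then interpret S: tstep G N M e .
  have hk: "S.c x (comm G n g) \<in> S.Zk k \<and> S.c x (comm G g n) \<in> S.Zk k"
    if "x \<in> N" "n \<in> N" "g \<in> carrier G" for x n g
  proof -
    have cN: "comm G n g \<in> N" "comm G g n \<in> N" using comm_N[OF assms(1)] that by auto
    from k show ?thesis
    proof
      assume "k = e" then show ?thesis using S.c_Zk_e that cN by simp
    next
      assume "k = 1 \<and> (\<forall>n\<in>N. \<forall>g\<in>carrier G. comm G n g \<in> M \<and> comm G g n \<in> M)"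
      then show ?thesis using that S.c_M S.Zk_one by simp
    qed
  qed
  show ?thesis by (rule S.main_L[OF hk assms(6-8)]) auto
qed

definition Pw :: "nat \<Rightarrow> nat \<Rightarrow> nat" where
  "Pw e i = (if odd e then e ^ i else 2 ^ (i - 1) * e ^ i)"

lemma tensor_pow:
  assumes e: "\<And>x. x \<in> carrier G \<Longrightarrow> x [^] e = \<one>" and t: "t \<in> carrier T"
  shows "t [^]\<^bsub>T\<^esub> Pw e i \<in> KK G (D i)"
proof (induction i)
  case 0 then show ?case using t KK_top by (simp add: Pw_def)
next
  case (Suc i)
  have tc: "t [^]\<^bsub>T\<^esub> Pw e i \<in> carrier T" using t by simp
  show ?case
  proof (cases "i = 0")
    case True
    have "(t [^]\<^bsub>T\<^esub> Pw e i) [^]\<^bsub>T\<^esub> (e * 1) \<in> KK G (D (Suc i))"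
    proof (rule step_export[where k=1, OF D_normal D_normal _ e _ _ _ Suc])
      show "\<And>x y. x \<in> D i \<Longrightarrow> y \<in> D i \<Longrightarrow> comm G x y \<in> D (Suc i)" by (rule comm_D)
      show "1 = e \<or> (1 = 1 \<and> (\<forall>n\<in>D i. \<forall>g\<in>carrier G. comm G n g \<in> D (Suc i) \<and> comm G g n \<in> D (Suc i)))"
        using True comm_D[of _ 0] by simp
    qed simp_all
    moreover have "Pw e (Suc i) = Pw e i * (e * 1)" using True by (simp add: Pw_def)
    ultimately show ?thesis using t by (simp add: T.nat_pow_pow)
  next
    case False
    show ?thesis
    proof (cases "odd e")
      case True
      have "(t [^]\<^bsub>T\<^esub> Pw e i) [^]\<^bsub>T\<^esub> (e * 1) \<in> KK G (D (Suc i))"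
        by (rule step_export[where k=e, OF D_normal D_normal comm_D e _ _ _ Suc]) (use True tri_odd in auto)
      moreover have "Pw e (Suc i) = Pw e i * (e * 1)" using True by (simp add: Pw_def)
      ultimately show ?thesis using t by (simp add: T.nat_pow_pow)
    next
      case ev: False
      have "(t [^]\<^bsub>T\<^esub> Pw e i) [^]\<^bsub>T\<^esub> (e * 2) \<in> KK G (D (Suc i))"
        by (rule step_export[where k=e, OF D_normal D_normal comm_D e _ _ _ Suc]) (use tri_times2 tri_double in auto)
      moreover have "Pw e (Suc i) = Pw e i * (e * 2)" using ev False
        by (cases i) (simp_all add: Pw_def)
      ultimately show ?thesis using t by (simp add: T.nat_pow_pow)
    qed
  qed
qed

end


context group
begin

lemma cen_swap:
  assumes "\<And>q. q \<in> carrier G \<Longrightarrow> z \<otimes> q = q \<otimes> z" "z \<in> carrier G" "x \<in> carrier G" "y \<in> carrier G"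
  shows "z \<otimes> (x \<otimes> y) = x \<otimes> (z \<otimes> y)"
  using assms(1)[of x] assms(2-4) by (simp add: m_assoc[symmetric])

lemma comm_central:
  assumes zc: "\<And>q. q \<in> carrier G \<Longrightarrow> z \<otimes> q = q \<otimes> z" and wc: "\<And>q. q \<in> carrier G \<Longrightarrow> w \<otimes> q = q \<otimes> w"
    and c: "a \<in> carrier G" "b \<in> carrier G" "z \<in> carrier G" "w \<in> carrier G"
  shows "comm G (a \<otimes> z) (b \<otimes> w) = comm G a b"
  using c by (simp add: comm_def m_assoc inv_mult_group cen_swap[OF zc] cen_swap[OF wc])

lemma comm_id1: "a \<in> carrier G \<Longrightarrow> b \<in> carrier G \<Longrightarrow> c \<in> carrier G \<Longrightarrow>
  comm G (a \<otimes> b) c = comm G (a \<otimes> b \<otimes> inv a) (a \<otimes> c \<otimes> inv a) \<otimes> comm G a c"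
  by (simp add: comm_def m_assoc inv_mult_group)

lemma comm_id2: "a \<in> carrier G \<Longrightarrow> c \<in> carrier G \<Longrightarrow> c' \<in> carrier G \<Longrightarrow>
  comm G a (c \<otimes> c') = comm G a c \<otimes> comm G (c \<otimes> a \<otimes> inv c) (c \<otimes> c' \<otimes> inv c)"
  by (simp add: comm_def m_assoc inv_mult_group)

lemma comm_conj: "g \<in> carrier G \<Longrightarrow> h \<in> carrier G \<Longrightarrow> k \<in> carrier G \<Longrightarrow>
  g \<otimes> comm G h k \<otimes> inv g = comm G (g \<otimes> h \<otimes> inv g) (g \<otimes> k \<otimes> inv g)"
  by (simp add: comm_def m_assoc inv_mult_group)

end


definition fgen :: "'a \<Rightarrow> 'a word set" where "fgen x = pgen {} x"

definition eps :: "('a, 'b) monoid_scheme \<Rightarrow> 'a word set \<Rightarrow> 'a" where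
  "eps G = pres_hom G (\<lambda>x. if x \<in> carrier G then x else \<one>\<^bsub>G\<^esub>)"

context tsq
begin

abbreviation F where "F \<equiv> free_on_carrier G"
abbreviation R where "R \<equiv> hopf_R G"
abbreviation FR where "FR \<equiv> mixed_commutator F (carrier F) R"
abbreviation FF where "FF \<equiv> mixed_commutator F (carrier F) (carrier F)"

lemma F_def': "F = presented_group (carrier G) {}" by (simp add: free_on_carrier_def)

sublocale F: group F unfolding F_def' by (rule presented_group_is_group)

lemma eps_props: "eps G \<in> hom F G"
  "x \<in> carrier G \<Longrightarrow> eps G (fgen x) = x"
  "eps G (pres_class {} w) = wev G (\<lambda>x. if x \<in> carrier G then x else \<one>) w"
proof -
  have f: "\<And>x. (\<lambda>x. if x \<in> carrier G then x else \<one>) x \<in> carrier G" by simp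
  have r: "\<And>r. r \<in> ({} :: 'a word set) \<Longrightarrow> wev G (\<lambda>x. if x \<in> carrier G then x else \<one>) r = \<one>" by simp
  show "eps G \<in> hom F G" unfolding eps_def F_def' by (rule pres_hom_hom[OF group_axioms f r])
  show "x \<in> carrier G \<Longrightarrow> eps G (fgen x) = x"
    unfolding eps_def fgen_def by (subst pres_hom_gen[OF group_axioms f r]) simp_all
  show "eps G (pres_class {} w) = wev G (\<lambda>x. if x \<in> carrier G then x else \<one>) w"
    unfolding eps_def by (rule pres_hom_class[OF group_axioms f r])
qed

lemma eps_carrier[simp]: "y \<in> carrier F \<Longrightarrow> eps G y \<in> carrier G"
  by (rule hom_in_carrier[OF eps_props(1)])

lemma fgen_carrier[simp]: "x \<in> carrier G \<Longrightarrow> fgen x \<in> carrier F"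
  unfolding fgen_def F_def' by (rule pgen_carrier)

lemma wev_word_eval: "word_over (carrier G) w \<Longrightarrow>
   wev G (\<lambda>x. if x \<in> carrier G then x else \<one>) w = word_eval G w"
  by (induction w) (auto simp: word_eval_def split: prod.splits)

lemma R_kernel: "R = kernel F G (eps G)"
proof
  show "R \<subseteq> kernel F G (eps G)"
  proof
    fix c assume "c \<in> R"
    then obtain w where c: "c \<in> carrier F" "w \<in> c" "word_over (carrier G) w" "word_eval G w = \<one>"
      unfolding hopf_R_def word_over_def by blast
    obtain w0 where w0: "c = pres_class {} w0" using c(1) unfolding F_def' pres_carrier by blast
    have "pres_class {} w = c" using c(2) w0 unfolding pres_class_def
      by (metis mem_Collect_eq pres_class_def pres_class_eq_iff)
    then have "eps G c = word_eval G w" using c(3) eps_props(3) wev_word_eval by metis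
    then show "c \<in> kernel F G (eps G)" using c by (simp add: kernel_def)
  qed
  show "kernel F G (eps G) \<subseteq> R"
  proof
    fix c assume "c \<in> kernel F G (eps G)"
    then have c: "c \<in> carrier F" "eps G c = \<one>" by (auto simp: kernel_def)
    obtain w0 where w0: "c = pres_class {} w0" "word_over (carrier G) w0"
      using c(1) unfolding F_def' pres_carrier by blast
    have "word_eval G w0 = \<one>" using c(2) w0 eps_props(3) wev_word_eval by metis
    moreover have "w0 \<in> c" using w0 by (simp add: pres_class_mem)
    ultimately show "c \<in> R" using c w0 unfolding hopf_R_def word_over_def by blast
  qed
qed

lemma R_normal: "R \<lhd> F"
proof -
  have "group_hom F G (eps G)"
    by (simp add: group_hom_def group_hom_axioms_def F.group_axioms group_axioms eps_props(1))
  then show ?thesis unfolding R_kernel by (rule group_hom.normal_kernel)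
qed

lemma R_sub: "R \<subseteq> carrier F" using R_normal by (simp add: normal_imp_subgroup subgroup.subset)

lemma FR_normal: "FR \<lhd> F"
  unfolding mixed_commutator_def
proof (rule F.normal_generateI)
  interpret RN: normal R F by (rule R_normal)
  show "{h \<otimes>\<^bsub>F\<^esub> k \<otimes>\<^bsub>F\<^esub> inv\<^bsub>F\<^esub> h \<otimes>\<^bsub>F\<^esub> inv\<^bsub>F\<^esub> k |h k. h \<in> carrier F \<and> k \<in> R} \<subseteq> carrier F"
    using R_sub by auto
  fix h g assume h: "h \<in> {h \<otimes>\<^bsub>F\<^esub> k \<otimes>\<^bsub>F\<^esub> inv\<^bsub>F\<^esub> h \<otimes>\<^bsub>F\<^esub> inv\<^bsub>F\<^esub> k |h k. h \<in> carrier F \<and> k \<in> R}"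
    and g: "g \<in> carrier F"
  then obtain a k where ak: "h = comm F a k" "a \<in> carrier F" "k \<in> R" by (auto simp: comm_def)
  have kc: "k \<in> carrier F" using ak R_sub by blast
  have "g \<otimes>\<^bsub>F\<^esub> h \<otimes>\<^bsub>F\<^esub> inv\<^bsub>F\<^esub> g = comm F (g \<otimes>\<^bsub>F\<^esub> a \<otimes>\<^bsub>F\<^esub> inv\<^bsub>F\<^esub> g) (g \<otimes>\<^bsub>F\<^esub> k \<otimes>\<^bsub>F\<^esub> inv\<^bsub>F\<^esub> g)"
    using ak kc g by (simp add: F.comm_conj)
  moreover have "g \<otimes>\<^bsub>F\<^esub> k \<otimes>\<^bsub>F\<^esub> inv\<^bsub>F\<^esub> g \<in> R" using RN.inv_op_closed2 g ak by blast
  moreover have "g \<otimes>\<^bsub>F\<^esub> a \<otimes>\<^bsub>F\<^esub> inv\<^bsub>F\<^esub> g \<in> carrier F" using g ak by simp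
  ultimately show "g \<otimes>\<^bsub>F\<^esub> h \<otimes>\<^bsub>F\<^esub> inv\<^bsub>F\<^esub> g \<in> {h \<otimes>\<^bsub>F\<^esub> k \<otimes>\<^bsub>F\<^esub> inv\<^bsub>F\<^esub> h \<otimes>\<^bsub>F\<^esub> inv\<^bsub>F\<^esub> k |h k. h \<in> carrier F \<and> k \<in> R}"
    unfolding comm_def by blast
qed

lemma FR_sub_R: "FR \<subseteq> R"
  unfolding mixed_commutator_def
proof (rule F.generate_subgroup_incl)
  interpret RN: normal R F by (rule R_normal)
  show "subgroup R F" by (rule normal_imp_subgroup[OF R_normal])
  show "{h \<otimes>\<^bsub>F\<^esub> k \<otimes>\<^bsub>F\<^esub> inv\<^bsub>F\<^esub> h \<otimes>\<^bsub>F\<^esub> inv\<^bsub>F\<^esub> k |h k. h \<in> carrier F \<and> k \<in> R} \<subseteq> R"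
  proof
    fix x assume "x \<in> {h \<otimes>\<^bsub>F\<^esub> k \<otimes>\<^bsub>F\<^esub> inv\<^bsub>F\<^esub> h \<otimes>\<^bsub>F\<^esub> inv\<^bsub>F\<^esub> k |h k. h \<in> carrier F \<and> k \<in> R}"
    then obtain h k where hk: "x = h \<otimes>\<^bsub>F\<^esub> k \<otimes>\<^bsub>F\<^esub> inv\<^bsub>F\<^esub> h \<otimes>\<^bsub>F\<^esub> inv\<^bsub>F\<^esub> k" "h \<in> carrier F" "k \<in> R" by blast
    have "h \<otimes>\<^bsub>F\<^esub> k \<otimes>\<^bsub>F\<^esub> inv\<^bsub>F\<^esub> h \<in> R" using RN.inv_op_closed2 hk by blast
    moreover have "inv\<^bsub>F\<^esub> k \<in> R" using hk by (simp add: RN.m_inv_closed)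
    ultimately show "x \<in> R" using hk by (simp add: RN.m_closed)
  qed
qed

lemma FF_sg: "subgroup FF F"
  unfolding mixed_commutator_def by (rule F.generate_is_subgroup) auto

lemma FR_sub_FF: "FR \<subseteq> FF"
  unfolding mixed_commutator_def
  by (rule F.generate_subgroup_incl[OF _ FF_sg[unfolded mixed_commutator_def]])
     (use R_sub in \<open>blast intro: generate.incl\<close>)

end


context group
begin

lemma comm_one_commute: assumes "a \<in> carrier G" "b \<in> carrier G" "comm G a b = \<one>"
  shows "a \<otimes> b = b \<otimes> a"
proof -
  have "a \<otimes> b = comm G a b \<otimes> b \<otimes> a" using assms(1,2) by (simp add: comm_def m_assoc)
  then show ?thesis using assms by simp
qed

end

locale schur = tsq
begin

definition QF where "QF = F Mod FR"
definition piF where "piF x = FR #>\<^bsub>F\<^esub> x"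

sublocale QF: group QF unfolding QF_def by (rule normal.factorgroup_is_group[OF FR_normal])

lemma FR_sg: "subgroup FR F" by (rule normal_imp_subgroup[OF FR_normal])

lemma piF_hom: "piF \<in> hom F QF"
  unfolding piF_def QF_def using normal.r_coset_hom_Mod[OF FR_normal] by simp

lemma piF_carrier[simp]: "x \<in> carrier F \<Longrightarrow> piF x \<in> carrier QF"
  by (rule hom_in_carrier[OF piF_hom])

lemma piF_mult: "a \<in> carrier F \<Longrightarrow> b \<in> carrier F \<Longrightarrow> piF (a \<otimes>\<^bsub>F\<^esub> b) = piF a \<otimes>\<^bsub>QF\<^esub> piF b"
  by (rule hom_mult[OF piF_hom])

lemma piF_inv: "a \<in> carrier F \<Longrightarrow> piF (inv\<^bsub>F\<^esub> a) = inv\<^bsub>QF\<^esub> piF a"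
  by (rule hom_inv_gen[OF piF_hom _ F.group_axioms QF.group_axioms])

lemma piF_one[simp]: "piF \<one>\<^bsub>F\<^esub> = \<one>\<^bsub>QF\<^esub>"
  by (rule hom_one[OF piF_hom F.group_axioms QF.group_axioms])

lemma piF_pow: "a \<in> carrier F \<Longrightarrow> piF (a [^]\<^bsub>F\<^esub> (n::nat)) = piF a [^]\<^bsub>QF\<^esub> n"
  by (rule hom_nat_pow[OF piF_hom _ F.group_axioms QF.group_axioms])

lemma piF_eq_one: "x \<in> carrier F \<Longrightarrow> piF x = \<one>\<^bsub>QF\<^esub> \<longleftrightarrow> x \<in> FR"
  unfolding piF_def QF_def using F.coset_join1[OF _ _ FR_sg] F.coset_join2[OF _ FR_sg] by auto

lemma QF_elem: "q \<in> carrier QF \<Longrightarrow> \<exists>y\<in>carrier F. q = piF y"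
  unfolding piF_def QF_def carrier_FactGroup by blast

lemma R_central: assumes "r \<in> R" "q \<in> carrier QF" shows "piF r \<otimes>\<^bsub>QF\<^esub> q = q \<otimes>\<^bsub>QF\<^esub> piF r"
proof -
  obtain y where y: "y \<in> carrier F" "q = piF y" using QF_elem[OF assms(2)] by blast
  have rc: "r \<in> carrier F" using assms R_sub by blast
  have "comm F y r \<in> FR" unfolding mixed_commutator_def comm_def
    using y assms by (intro generate.incl) blast
  then have "piF (comm F y r) = \<one>\<^bsub>QF\<^esub>" using y rc by (simp add: piF_eq_one comm_def)
  then have "comm QF (piF y) (piF r) = \<one>\<^bsub>QF\<^esub>" using y rc by (simp add: comm_def piF_mult piF_inv)
  then have "piF y \<otimes>\<^bsub>QF\<^esub> piF r = piF r \<otimes>\<^bsub>QF\<^esub> piF y" using y rc by (intro QF.comm_one_commute) auto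
  then show ?thesis using y by simp
qed

abbreviation psi where "psi x \<equiv> piF (fgen x)"

lemma psi_carrier[simp]: "x \<in> carrier G \<Longrightarrow> psi x \<in> carrier QF" by simp

lemma psi_eq: assumes "y \<in> carrier F"
  shows "\<exists>z. z \<in> carrier QF \<and> (\<forall>q. q \<in> carrier QF \<longrightarrow> z \<otimes>\<^bsub>QF\<^esub> q = q \<otimes>\<^bsub>QF\<^esub> z) \<and> piF y = psi (eps G y) \<otimes>\<^bsub>QF\<^esub> z"
proof -
  define r where "r = inv\<^bsub>F\<^esub> (fgen (eps G y)) \<otimes>\<^bsub>F\<^esub> y"
  have rc: "r \<in> carrier F" using assms by (simp add: r_def)
  have "eps G r = inv (eps G (fgen (eps G y))) \<otimes> eps G y"
    using assms by (simp add: r_def hom_mult[OF eps_props(1)] hom_inv_gen[OF eps_props(1) _ F.group_axioms group_axioms])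
  also have "\<dots> = \<one>" using assms by (simp add: eps_props(2))
  finally have "r \<in> R" using rc R_kernel by (simp add: kernel_def)
  moreover have "y = fgen (eps G y) \<otimes>\<^bsub>F\<^esub> r" using assms by (simp add: r_def)
  ultimately show ?thesis using R_central rc assms
    by (intro exI[of _ "piF r"]) (metis piF_carrier piF_mult fgen_carrier eps_carrier)
qed

lemma psi_comm: assumes "a \<in> carrier F" "b \<in> carrier F"
  shows "comm QF (piF a) (piF b) = comm QF (psi (eps G a)) (psi (eps G b))"
proof -
  obtain z where z: "z \<in> carrier QF" "\<And>q. q \<in> carrier QF \<Longrightarrow> z \<otimes>\<^bsub>QF\<^esub> q = q \<otimes>\<^bsub>QF\<^esub> z"
    "piF a = psi (eps G a) \<otimes>\<^bsub>QF\<^esub> z" using psi_eq[OF assms(1)] by blast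
  obtain w where w: "w \<in> carrier QF" "\<And>q. q \<in> carrier QF \<Longrightarrow> w \<otimes>\<^bsub>QF\<^esub> q = q \<otimes>\<^bsub>QF\<^esub> w"
    "piF b = psi (eps G b) \<otimes>\<^bsub>QF\<^esub> w" using psi_eq[OF assms(2)] by blast
  show ?thesis unfolding z(3) w(3)
    by (rule QF.comm_central[OF z(2) w(2)]) (use assms z w in simp_all)
qed

definition phi where "phi = tensor_lift G QF (\<lambda>g h. comm QF (psi g) (psi h))"

lemma phi: "phi \<in> hom T QF" "g \<in> carrier G \<Longrightarrow> h \<in> carrier G \<Longrightarrow> phi (tn G g h) = comm QF (psi g) (psi h)"
proof -
  have e1: "eps G (fgen g \<otimes>\<^bsub>F\<^esub> fgen g') = g \<otimes> g'" if "g \<in> carrier G" "g' \<in> carrier G" for g g'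
    using that by (simp add: hom_mult[OF eps_props(1)] eps_props(2))
  have e2: "eps G (fgen g \<otimes>\<^bsub>F\<^esub> fgen g' \<otimes>\<^bsub>F\<^esub> inv\<^bsub>F\<^esub> fgen g) = gconj G g g'" if "g \<in> carrier G" "g' \<in> carrier G" for g g'
    using that by (simp add: hom_mult[OF eps_props(1)] hom_inv_gen[OF eps_props(1) _ F.group_axioms group_axioms]
      eps_props(2) gconj_def)
  have c1: "comm QF (psi (g \<otimes> g')) (psi h) = comm QF (psi g \<otimes>\<^bsub>QF\<^esub> psi g') (psi h)"
    if "g \<in> carrier G" "g' \<in> carrier G" "h \<in> carrier G" for g g' h
    using psi_comm[of "fgen g \<otimes>\<^bsub>F\<^esub> fgen g'" "fgen h"] that by (simp add: e1 eps_props(2) piF_mult)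
  have c2: "comm QF (psi g) (psi (h \<otimes> h')) = comm QF (psi g) (psi h \<otimes>\<^bsub>QF\<^esub> psi h')"
    if "g \<in> carrier G" "h' \<in> carrier G" "h \<in> carrier G" for g h' h
    using psi_comm[of "fgen g" "fgen h \<otimes>\<^bsub>F\<^esub> fgen h'"] that by (simp add: e1 eps_props(2) piF_mult)
  have c3: "comm QF (psi (gconj G g a)) (psi (gconj G g b)) =
     comm QF (psi g \<otimes>\<^bsub>QF\<^esub> psi a \<otimes>\<^bsub>QF\<^esub> inv\<^bsub>QF\<^esub> psi g) (psi g \<otimes>\<^bsub>QF\<^esub> psi b \<otimes>\<^bsub>QF\<^esub> inv\<^bsub>QF\<^esub> psi g)"
    if "g \<in> carrier G" "a \<in> carrier G" "b \<in> carrier G" for g a b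
    using psi_comm[of "fgen g \<otimes>\<^bsub>F\<^esub> fgen a \<otimes>\<^bsub>F\<^esub> inv\<^bsub>F\<^esub> fgen g" "fgen g \<otimes>\<^bsub>F\<^esub> fgen b \<otimes>\<^bsub>F\<^esub> inv\<^bsub>F\<^esub> fgen g"] that
    by (simp add: e2 piF_mult piF_inv)
  have LR1: "comm QF (psi (g \<otimes> g')) (psi h) = comm QF (psi (gconj G g g')) (psi (gconj G g h)) \<otimes>\<^bsub>QF\<^esub> comm QF (psi g) (psi h)"
    if "g \<in> carrier G" "g' \<in> carrier G" "h \<in> carrier G" for g g' h
    using c1[OF that] c3[OF that(1,2,3)] QF.comm_id1[of "psi g" "psi g'" "psi h"] that by simp
  have LR2: "comm QF (psi g) (psi (h \<otimes> h')) = comm QF (psi g) (psi h) \<otimes>\<^bsub>QF\<^esub> comm QF (psi (gconj G h g)) (psi (gconj G h h'))"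
    if "g \<in> carrier G" "h \<in> carrier G" "h' \<in> carrier G" for g h h'
    using c2[OF that(1,3,2)] c3[OF that(2,1,3)] QF.comm_id2[of "psi g" "psi h" "psi h'"] that by simp
  have L: "tensor_lift G QF (\<lambda>g h. comm QF (psi g) (psi h)) \<in> hom T QF \<and>
     (\<forall>g\<in>carrier G. \<forall>h\<in>carrier G. tensor_lift G QF (\<lambda>g h. comm QF (psi g) (psi h)) (tn G g h) = comm QF (psi g) (psi h))"
  proof (intro conjI ballI)
    show "tensor_lift G QF (\<lambda>g h. comm QF (psi g) (psi h)) \<in> hom T QF"
     and "\<And>g h. g \<in> carrier G \<Longrightarrow> h \<in> carrier G \<Longrightarrow> tensor_lift G QF (\<lambda>g h. comm QF (psi g) (psi h)) (tn G g h) = comm QF (psi g) (psi h)"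
      by (rule tensor_lift[OF QF.group_axioms], simp add: comm_def,
          simp add: LR1, simp add: LR2)+
  qed
  then show "phi \<in> hom T QF" "g \<in> carrier G \<Longrightarrow> h \<in> carrier G \<Longrightarrow> phi (tn G g h) = comm QF (psi g) (psi h)"
    unfolding phi_def by auto
qed

lemma FF_image: assumes "h \<in> FF" shows "\<exists>t\<in>carrier T. piF h = phi t"
  using assms unfolding mixed_commutator_def
proof (induction rule: generate.induct)
  case one then show ?case
    by (intro bexI[of _ "\<one>\<^bsub>T\<^esub>"]) (simp_all add: hom_one[OF phi(1) T.group_axioms QF.group_axioms])
next
  case (incl h)
  then obtain a b where ab: "h = comm F a b" "a \<in> carrier F" "b \<in> carrier F" by (auto simp: comm_def)
  have "piF h = comm QF (piF a) (piF b)" using ab by (simp add: comm_def piF_mult piF_inv)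
  also have "\<dots> = phi (tn G (eps G a) (eps G b))" using ab by (simp add: psi_comm[OF ab(2,3)] phi(2))
  finally show ?case using ab by (intro bexI[of _ "tn G (eps G a) (eps G b)"]) simp_all
next
  case (inv h)
  then obtain a b where ab: "h = comm F a b" "a \<in> carrier F" "b \<in> carrier F" by (auto simp: comm_def)
  have hc: "h \<in> carrier F" using ab by (simp add: comm_def)
  have "piF h = comm QF (piF a) (piF b)" using ab by (simp add: comm_def piF_mult piF_inv)
  also have "\<dots> = phi (tn G (eps G a) (eps G b))" using ab by (simp add: psi_comm[OF ab(2,3)] phi(2))
  finally have e: "piF h = phi (tn G (eps G a) (eps G b))" .
  have "piF (inv\<^bsub>F\<^esub> h) = inv\<^bsub>QF\<^esub> piF h" using hc by (rule piF_inv)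
  also have "\<dots> = inv\<^bsub>QF\<^esub> phi (tn G (eps G a) (eps G b))" using e by simp
  also have "\<dots> = phi (inv\<^bsub>T\<^esub> tn G (eps G a) (eps G b))"
    using ab by (intro hom_inv_gen[OF phi(1) _ T.group_axioms QF.group_axioms, symmetric]) simp
  finally have "piF (inv\<^bsub>F\<^esub> h) = phi (inv\<^bsub>T\<^esub> tn G (eps G a) (eps G b))" .
  then show ?case using ab by (intro bexI[of _ "inv\<^bsub>T\<^esub> tn G (eps G a) (eps G b)"]) simp_all
next
  case (eng h1 h2)
  have sub: "{h \<otimes>\<^bsub>F\<^esub> k \<otimes>\<^bsub>F\<^esub> inv\<^bsub>F\<^esub> h \<otimes>\<^bsub>F\<^esub> inv\<^bsub>F\<^esub> k |h k. h \<in> carrier F \<and> k \<in> carrier F} \<subseteq> carrier F"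
    by blast
  have hc: "h1 \<in> carrier F" "h2 \<in> carrier F"
    using F.generate_in_carrier[OF sub eng(1)] F.generate_in_carrier[OF sub eng(2)] by auto
  obtain t1 where t1: "t1 \<in> carrier T" "piF h1 = phi t1" using eng(3) by blast
  obtain t2 where t2: "t2 \<in> carrier T" "piF h2 = phi t2" using eng(4) by blast
  note t = t1 t2
  have "piF (h1 \<otimes>\<^bsub>F\<^esub> h2) = phi (t1 \<otimes>\<^bsub>T\<^esub> t2)" using hc t by (simp add: piF_mult hom_mult[OF phi(1)])
  then show ?case using t by (intro bexI[of _ "t1 \<otimes>\<^bsub>T\<^esub> t2"]) simp_all
qed

lemma schur_pow:
  fixes B :: nat
  assumes B: "\<And>t. t \<in> carrier T \<Longrightarrow> t [^]\<^bsub>T\<^esub> B = \<one>\<^bsub>T\<^esub>" and h: "h \<in> FF"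
  shows "h [^]\<^bsub>F\<^esub> B \<in> FR"
proof -
  have hc: "h \<in> carrier F" using h FF_sg subgroup.subset by blast
  obtain t where t: "t \<in> carrier T" "piF h = phi t" using FF_image[OF h] by blast
  have "piF (h [^]\<^bsub>F\<^esub> B) = phi (t [^]\<^bsub>T\<^esub> B)"
    using hc t by (simp add: piF_pow hom_nat_pow[OF phi(1) _ T.group_axioms QF.group_axioms])
  also have "\<dots> = \<one>\<^bsub>QF\<^esub>" using B t by (simp add: hom_one[OF phi(1) T.group_axioms QF.group_axioms])
  finally show ?thesis using hc piF_eq_one by simp
qed

lemma schur_exp:
  assumes B: "\<And>t. t \<in> carrier T \<Longrightarrow> t [^]\<^bsub>T\<^esub> B = \<one>\<^bsub>T\<^esub>"
  shows "group_exponent (schur_multiplier G) dvd B"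
proof -
  define H where "H = R \<inter> FF"
  have Hsg: "subgroup H F" unfolding H_def
    by (rule F.subgroups_Inter_pair[OF normal_imp_subgroup[OF R_normal] FF_sg])
  have FRH: "FR \<subseteq> H" using FR_sub_R FR_sub_FF by (auto simp: H_def)
  define FH where "FH = F\<lparr>carrier := H\<rparr>"
  have FHg: "group FH" unfolding FH_def by (rule F.subgroup_imp_group[OF Hsg])
  have NFH: "FR \<lhd> FH" unfolding FH_def by (rule F.normal_restrict_supergroup[OF Hsg FR_normal FRH])
  have S: "schur_multiplier G = FH Mod FR" by (simp add: schur_multiplier_def FH_def H_def Let_def)
  interpret SG: group "FH Mod FR" by (rule normal.factorgroup_is_group[OF NFH])
  have rc: "\<And>x. FR #>\<^bsub>FH\<^esub> x = FR #>\<^bsub>F\<^esub> x" by (simp add: r_coset_def FH_def)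
  show ?thesis unfolding S
  proof (rule exponent_dvd[OF SG.is_monoid])
    fix Y assume "Y \<in> carrier (FH Mod FR)"
    then obtain h where h: "h \<in> H" "Y = FR #>\<^bsub>FH\<^esub> h" unfolding carrier_FactGroup FH_def by auto
    have hFH: "h \<in> carrier FH" using h by (simp add: FH_def)
    have "Y [^]\<^bsub>FH Mod FR\<^esub> B = FR #>\<^bsub>FH\<^esub> (h [^]\<^bsub>FH\<^esub> B)"
      unfolding h(2) by (rule hom_nat_pow[OF normal.r_coset_hom_Mod[OF NFH] hFH FHg SG.group_axioms, symmetric])
    also have "h [^]\<^bsub>FH\<^esub> B = h [^]\<^bsub>F\<^esub> B" unfolding FH_def by (rule F.nat_pow_consistent[symmetric])
    also have "FR #>\<^bsub>FH\<^esub> (h [^]\<^bsub>F\<^esub> B) = FR"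
    proof -
      have hF: "h \<in> carrier F" using h Hsg subgroup.subset by blast
      have "h [^]\<^bsub>F\<^esub> B \<in> FR" using schur_pow[OF B] h by (simp add: H_def)
      then show ?thesis unfolding rc using F.coset_join2[OF _ FR_sg] hF by simp
    qed
    finally show "Y [^]\<^bsub>FH Mod FR\<^esub> B = \<one>\<^bsub>FH Mod FR\<^esub>" by simp
  qed
qed

end


theorem theorem6p3:
  fixes G :: "('a, 'b) monoid_scheme" and d :: nat
  assumes "group G" and "solvable G" and "derived_length G = d"
  shows "(odd (group_exponent G) \<longrightarrow>
           group_exponent (tensor_square G) dvd (group_exponent G) ^ d \<and>
           group_exponent (schur_multiplier G) dvd (group_exponent G) ^ d)
       \<and> (even (group_exponent G) \<longrightarrow>
           group_exponent (tensor_square G) dvd 2 ^ (d - 1) * (group_exponent G) ^ d \<and>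
           group_exponent (schur_multiplier G) dvd 2 ^ (d - 1) * (group_exponent G) ^ d)"
proof -
  interpret schur G by (rule schur.intro, simp add: tsq_def assms(1))
  define e where "e = group_exponent G"
  have "\<exists>n. (derived G ^^ n) (carrier G) = {\<one>\<^bsub>G\<^esub>}" using assms(2) solvable_iff_trivial_derived_seq by blast
  then have Dd: "(derived G ^^ d) (carrier G) = {\<one>\<^bsub>G\<^esub>}" unfolding assms(3)[symmetric] derived_length_def by (rule LeastI_ex)
  show ?thesis
  proof (cases "e = 0")
    case True
    have "d \<noteq> 0"
    proof
      assume "d = 0"
      then have "carrier G = {\<one>\<^bsub>G\<^esub>}" using Dd by simp
      then have "\<exists>n::nat>0. \<forall>x\<in>carrier G. x [^]\<^bsub>G\<^esub> n = \<one>\<^bsub>G\<^esub>" by (intro exI[of _ 1]) auto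
      then have "e = (LEAST n::nat. n > 0 \<and> (\<forall>x\<in>carrier G. x [^]\<^bsub>G\<^esub> n = \<one>\<^bsub>G\<^esub>))"
        by (simp add: e_def group_exponent_def)
      moreover have "(LEAST n::nat. n > 0 \<and> (\<forall>x\<in>carrier G. x [^]\<^bsub>G\<^esub> n = \<one>\<^bsub>G\<^esub>)) > 0"
        using LeastI_ex[OF \<open>\<exists>n::nat>0. \<forall>x\<in>carrier G. x [^]\<^bsub>G\<^esub> n = \<one>\<^bsub>G\<^esub>\<close>] by blast
      ultimately show False using True by simp
    qed
    then have z: "2 ^ (d - 1) * e ^ d = 0" using True by simp
    show ?thesis unfolding e_def[symmetric] z using True by simp
  next
    case False
    then have ex: "\<exists>n::nat>0. \<forall>x\<in>carrier G. x [^]\<^bsub>G\<^esub> n = \<one>\<^bsub>G\<^esub>"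
      unfolding e_def group_exponent_def by (auto split: if_splits)
    then have "e = (LEAST n::nat. n > 0 \<and> (\<forall>x\<in>carrier G. x [^]\<^bsub>G\<^esub> n = \<one>\<^bsub>G\<^esub>))"
      by (simp add: e_def group_exponent_def)
    then have ee: "\<And>x. x \<in> carrier G \<Longrightarrow> x [^]\<^bsub>G\<^esub> e = \<one>\<^bsub>G\<^esub>"
      using LeastI_ex[OF ex] by auto
    have B: "\<And>t. t \<in> carrier (tensor_square G) \<Longrightarrow> t [^]\<^bsub>tensor_square G\<^esub> Pw e d = \<one>\<^bsub>tensor_square G\<^esub>"
    proof -
      fix t assume t: "t \<in> carrier (tensor_square G)"
      have "t [^]\<^bsub>tensor_square G\<^esub> Pw e d \<in> KK G {\<one>\<^bsub>G\<^esub>}" using tensor_pow[OF ee t, of d] Dd by simp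
      then show "t [^]\<^bsub>tensor_square G\<^esub> Pw e d = \<one>\<^bsub>tensor_square G\<^esub>" by (rule KK_bot)
    qed
    have t1: "group_exponent (tensor_square G) dvd Pw e d" by (rule exponent_dvd[OF T.is_monoid B])
    have t2: "group_exponent (schur_multiplier G) dvd Pw e d" by (rule schur_exp[OF B])
    show ?thesis using t1 t2 unfolding Pw_def e_def[symmetric] by (cases "odd e") simp_all
  qed
qed


end
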